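(* Let $V$ be an $n$-dimensional complex vector space, $\Lambda(V\otimes V^* )$ the exterior algebra on $V\otimes V^*$, $X=(x_{ij})_{1\le i,j\le n}\in\operatorname{Mat}_{n,n}(\Lambda(V\otimes V^* ))$, let $v={}^t(v_1,\ldots,v_n)$, $w={}^t(w_1,\ldots,w_n)$ with $v_i,w_i\in\mathbb{C}$ arbitrary, and put $$Q=\sum_{\sigma\in S_{n+1}}\sum_{1\le i_1,\ldots,i_{n+1}\le n}\operatorname{sgn}(\sigma)(X^2)_{i_1i_{\sigma(1)}}\cdots(X^2)_{i_{n-1}i_{\sigma(n-1)}}X_{i_ni_{\sigma(n)}}v_{i_{n+1}}w_{i_{\sigma(n+1)}}.$$ Then $$Q=(-1)^n\Big\{n!\,{}^tw X^{2n-1}v-(n-1)!\sum_{0\le k\le n-1}\operatorname{tr}(X^{2k+1})\,{}^tw X^{2n-2-2k}v\Big\}.$$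
   Context: $e_1,\ldots,e_n$ is a basis of $V$, $e_i^*$ its dual basis, $x_{ij}=e_i\otimes e_j^*$ is the standard basis of $V\otimes V^*$. Products in the exterior algebra are wedge products, and all products of entries are taken in the order written; $X^0$ is the identity matrix. *)

theory Defs
  imports Complex_Main "HOL-Combinatorics.Permutations"
begin

text \<open>Exterior algebra on the space with basis x_ij (generators indexed by pairs (i,j)).
An element is represented by its coefficient function on the standard monomial basis:
the monomial indexed by a finite set S of generators is the wedge product of the
elements of S in increasing (lexicographic) order.\<close>

type_synonym ext = "(nat \<times> nat) set \<Rightarrow> complex"

definition gen_less :: "nat \<times> nat \<Rightarrow> nat \<times> nat \<Rightarrow> bool" where
  "gen_less p q \<longleftrightarrow> fst p < fst q \<or> (fst p = fst q \<and> snd p < snd q)"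

text \<open>sign of reordering e_S wedge e_T (S, T disjoint) into increasing order\<close>
definition shuffle_sign :: "(nat \<times> nat) set \<Rightarrow> (nat \<times> nat) set \<Rightarrow> complex" where
  "shuffle_sign S T = (-1) ^ card {(s, t). s \<in> S \<and> t \<in> T \<and> gen_less t s}"

definition ext_zero :: ext where "ext_zero = (\<lambda>S. 0)"

definition ext_scalar :: "complex \<Rightarrow> ext" where
  "ext_scalar c = (\<lambda>S. if S = {} then c else 0)"

definition ext_gen :: "nat \<Rightarrow> nat \<Rightarrow> ext" where
  "ext_gen i j = (\<lambda>S. if S = {(i, j)} then 1 else 0)"

definition ext_add :: "ext \<Rightarrow> ext \<Rightarrow> ext" where
  "ext_add a b = (\<lambda>S. a S + b S)"

definition ext_smult :: "complex \<Rightarrow> ext \<Rightarrow> ext" where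
  "ext_smult c a = (\<lambda>S. c * a S)"

definition ext_sum :: "('i \<Rightarrow> ext) \<Rightarrow> 'i set \<Rightarrow> ext" where
  "ext_sum f I = (\<lambda>S. \<Sum>k\<in>I. f k S)"

definition ext_mult :: "ext \<Rightarrow> ext \<Rightarrow> ext" where
  "ext_mult a b = (\<lambda>U. \<Sum>S\<in>Pow U. a S * b (U - S) * shuffle_sign S (U - S))"

definition ext_prod_list :: "ext list \<Rightarrow> ext" where
  "ext_prod_list xs = foldr ext_mult xs (ext_scalar 1)"

text \<open>n x n matrices over the exterior algebra, indices 0..n-1\<close>
type_synonym emat = "nat \<Rightarrow> nat \<Rightarrow> ext"

definition Xmat :: emat where "Xmat = (\<lambda>i j. ext_gen i j)"

definition mat_mult :: "nat \<Rightarrow> emat \<Rightarrow> emat \<Rightarrow> emat" where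
  "mat_mult n A B = (\<lambda>i j. ext_sum (\<lambda>k. ext_mult (A i k) (B k j)) {..<n})"

definition mat_id :: emat where
  "mat_id = (\<lambda>i j. if i = j then ext_scalar 1 else ext_zero)"

fun mat_pow :: "nat \<Rightarrow> emat \<Rightarrow> nat \<Rightarrow> emat" where
  "mat_pow n A 0 = mat_id"
| "mat_pow n A (Suc m) = mat_mult n (mat_pow n A m) A"

definition mat_trace :: "nat \<Rightarrow> emat \<Rightarrow> ext" where
  "mat_trace n A = ext_sum (\<lambda>i. A i i) {..<n}"

definition bilin :: "nat \<Rightarrow> (nat \<Rightarrow> complex) \<Rightarrow> emat \<Rightarrow> (nat \<Rightarrow> complex) \<Rightarrow> ext" where
  "bilin n w A v = ext_sum (\<lambda>(i, j). ext_smult (w i * v j) (A i j)) ({..<n} \<times> {..<n})"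

text \<open>The quantity Q (0-indexed: sigma permutes {0..n}, positions 0..n-2 carry X^2,
position n-1 carries X, position n carries v_(i_n) w_(i_(sigma n)))\<close>
definition Qsum :: "nat \<Rightarrow> (nat \<Rightarrow> complex) \<Rightarrow> (nat \<Rightarrow> complex) \<Rightarrow> ext" where
  "Qsum n v w =
     ext_sum (\<lambda>\<sigma>. ext_sum (\<lambda>i.
        ext_smult (of_int (sign \<sigma>) * v (i n) * w (i (\<sigma> n)))
          (ext_prod_list
             (map (\<lambda>k. mat_pow n Xmat 2 (i k) (i (\<sigma> k))) [0..<n - 1]
              @ [Xmat (i (n - 1)) (i (\<sigma> (n - 1)))])))
       ({0..n} \<rightarrow>\<^sub>E {..<n}))
     {\<sigma>. \<sigma> permutes {0..n}}"

end

theory Submission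
  imports Defs
begin


definition inv_set :: "(nat \<times> nat) set \<Rightarrow> (nat \<times> nat) set \<Rightarrow> ((nat \<times> nat) \<times> (nat \<times> nat)) set" where
  "inv_set S T = {(s, t). s \<in> S \<and> t \<in> T \<and> gen_less t s}"

lemma shuffle_sign_inv: "shuffle_sign S T = (-1) ^ card (inv_set S T)"
  by (simp add: shuffle_sign_def inv_set_def)

lemma inv_set_sub: "inv_set S T \<subseteq> S \<times> T" by (auto simp: inv_set_def)

lemma card_inv_Un1:
  assumes "finite A" "finite B" "finite C" "A \<inter> B = {}"
  shows "card (inv_set (A \<union> B) C) = card (inv_set A C) + card (inv_set B C)"
proof -
  have "inv_set (A \<union> B) C = inv_set A C \<union> inv_set B C" by (auto simp: inv_set_def)
  moreover have "inv_set A C \<inter> inv_set B C = {}" using assms(4) by (auto simp: inv_set_def)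
  moreover have "finite (inv_set A C)" "finite (inv_set B C)"
    using inv_set_sub assms by (metis finite_SigmaI rev_finite_subset)+
  ultimately show ?thesis by (simp add: card_Un_disjoint)
qed

lemma card_inv_Un2:
  assumes "finite A" "finite B" "finite C" "B \<inter> C = {}"
  shows "card (inv_set A (B \<union> C)) = card (inv_set A B) + card (inv_set A C)"
proof -
  have "inv_set A (B \<union> C) = inv_set A B \<union> inv_set A C" by (auto simp: inv_set_def)
  moreover have "inv_set A B \<inter> inv_set A C = {}" using assms(4) by (auto simp: inv_set_def)
  moreover have "finite (inv_set A B)" "finite (inv_set A C)"
    using inv_set_sub assms by (metis finite_SigmaI rev_finite_subset)+
  ultimately show ?thesis by (simp add: card_Un_disjoint)
qed

lemma sign_assoc:
  assumes "finite R" "finite T" "finite W" "R \<inter> T = {}" "R \<inter> W = {}" "T \<inter> W = {}"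
  shows "shuffle_sign R T * shuffle_sign (R \<union> T) W = shuffle_sign T W * shuffle_sign R (T \<union> W)"
  using assms by (simp add: shuffle_sign_inv card_inv_Un1 card_inv_Un2 power_add[symmetric] ac_simps)

lemma sum_Pow_reindex:
  assumes "finite U"
  shows "(\<Sum>S\<in>Pow U. \<Sum>R\<in>Pow S. F R S) = (\<Sum>R\<in>Pow U. \<Sum>T\<in>Pow (U - R). F R (R \<union> T))"
proof -
  have fin1: "finite (Pow S)" if "S \<in> Pow U" for S using assms that finite_subset by auto
  have "(\<Sum>S\<in>Pow U. \<Sum>R\<in>Pow S. F R S) = (\<Sum>p\<in>Sigma (Pow U) Pow. F (snd p) (fst p))"
    using assms fin1 by (subst sum.Sigma) (auto simp: split_def)
  also have "\<dots> = (\<Sum>q\<in>Sigma (Pow U) (\<lambda>R. Pow (U - R)). F (fst q) (fst q \<union> snd q))"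
    by (rule sum.reindex_bij_witness[where i="\<lambda>(R,T). (R \<union> T, R)" and j="\<lambda>(S,R). (R, S - R)"]) (auto simp: Un_absorb1)
  also have "\<dots> = (\<Sum>R\<in>Pow U. \<Sum>T\<in>Pow (U - R). F R (R \<union> T))"
    using assms by (subst sum.Sigma) (auto simp: split_def)
  finally show ?thesis .
qed

lemma ext_mult_inf: "infinite U \<Longrightarrow> ext_mult a b U = 0"
  by (simp add: ext_mult_def)

lemma ext_mult_assoc: "ext_mult (ext_mult a b) c = ext_mult a (ext_mult b c)"
proof
  fix U
  show "ext_mult (ext_mult a b) c U = ext_mult a (ext_mult b c) U"
  proof (cases "finite U")
    case False thus ?thesis by (simp add: ext_mult_def)
  next
    case True
    have "ext_mult (ext_mult a b) c U =
      (\<Sum>S\<in>Pow U. \<Sum>R\<in>Pow S. a R * b (S - R) * shuffle_sign R (S - R) * c (U - S) * shuffle_sign S (U - S))"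
      by (simp add: ext_mult_def sum_distrib_right)
    also have "\<dots> = (\<Sum>R\<in>Pow U. \<Sum>T\<in>Pow (U - R). a R * b (R \<union> T - R) * shuffle_sign R (R \<union> T - R) * c (U - (R \<union> T)) * shuffle_sign (R \<union> T) (U - (R \<union> T)))"
      using True by (rule sum_Pow_reindex)
    also have "\<dots> = (\<Sum>R\<in>Pow U. \<Sum>T\<in>Pow (U - R). a R * (b T * c (U - R - T) * shuffle_sign T (U - R - T)) * shuffle_sign R (U - R))"
    proof (intro sum.cong refl)
      fix R T assume R: "R \<in> Pow U" and T: "T \<in> Pow (U - R)"
      have e1: "R \<union> T - R = T" using T by auto
      have e2: "U - (R \<union> T) = U - R - T" by auto
      have e3: "U - R = T \<union> (U - R - T)" using T by auto
      have fin: "finite R" "finite T" "finite (U - R - T)" using R T True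
        by (meson Diff_subset PowD finite_subset subset_trans)+
      have "shuffle_sign R T * shuffle_sign (R \<union> T) (U - R - T) = shuffle_sign T (U - R - T) * shuffle_sign R (T \<union> (U - R - T))"
        by (rule sign_assoc) (use fin T in auto)
      then show "a R * b (R \<union> T - R) * shuffle_sign R (R \<union> T - R) * c (U - (R \<union> T)) * shuffle_sign (R \<union> T) (U - (R \<union> T)) =
          a R * (b T * c (U - R - T) * shuffle_sign T (U - R - T)) * shuffle_sign R (U - R)"
        unfolding e1 e2 by (subst e3) (simp add: algebra_simps)
    qed
    also have "\<dots> = ext_mult a (ext_mult b c) U"
      by (simp add: ext_mult_def sum_distrib_left sum_distrib_right Diff_Diff_Int ac_simps)
    finally show ?thesis .
  qed
qed


typedef ea = "{a::ext. \<forall>S. infinite S \<longrightarrow> a S = 0}" morphisms Rep_ea Abs_ea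
  by (rule exI[of _ ext_zero]) (simp add: ext_zero_def)

lemma Rep_ea_inf: "infinite S \<Longrightarrow> Rep_ea a S = 0"
  using Rep_ea[of a] by auto

lemma Rep_ea_eqI: "(\<And>S. Rep_ea a S = Rep_ea b S) \<Longrightarrow> a = b"
  by (metis Rep_ea_inverse ext)

definition ea_ok :: "ext \<Rightarrow> bool" where "ea_ok a \<longleftrightarrow> (\<forall>S. infinite S \<longrightarrow> a S = 0)"

lemma Abs_ea_inv: "ea_ok a \<Longrightarrow> Rep_ea (Abs_ea a) = a"
  by (rule Abs_ea_inverse) (simp add: ea_ok_def)

lemma ea_ok_Rep[simp]: "ea_ok (Rep_ea a)" using Rep_ea[of a] by (simp add: ea_ok_def)
lemma ea_ok_mult[simp]: "ea_ok (ext_mult a b)" by (simp add: ea_ok_def ext_mult_def)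
lemma ea_ok_zero[simp]: "ea_ok ext_zero" by (simp add: ea_ok_def ext_zero_def)
lemma ea_ok_scalar[simp]: "ea_ok (ext_scalar c)" by (auto simp: ea_ok_def ext_scalar_def)
lemma ea_ok_gen[simp]: "ea_ok (ext_gen i j)" by (auto simp: ea_ok_def ext_gen_def)
lemma ea_ok_add[simp]: "ea_ok a \<Longrightarrow> ea_ok b \<Longrightarrow> ea_ok (ext_add a b)" by (simp add: ea_ok_def ext_add_def)
lemma ea_ok_smult[simp]: "ea_ok a \<Longrightarrow> ea_ok (ext_smult c a)" by (simp add: ea_ok_def ext_smult_def)
lemma ea_ok_sum[simp]: "(\<And>k. k \<in> I \<Longrightarrow> ea_ok (f k)) \<Longrightarrow> ea_ok (ext_sum f I)"
  by (simp add: ea_ok_def ext_sum_def)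
lemma ea_ok_uminus[simp]: "ea_ok a \<Longrightarrow> ea_ok (\<lambda>S. - a S)" by (simp add: ea_ok_def)
lemma ea_ok_minus[simp]: "ea_ok a \<Longrightarrow> ea_ok b \<Longrightarrow> ea_ok (\<lambda>S. a S - b S)" by (simp add: ea_ok_def)

lemma shuffle_sign_empty1[simp]: "shuffle_sign {} T = 1" by (simp add: shuffle_sign_def)
lemma shuffle_sign_empty2[simp]: "shuffle_sign S {} = 1" by (simp add: shuffle_sign_def)

lemma ext_mult_scalar_left: "finite U \<Longrightarrow> ext_mult (ext_scalar c) b U = c * b U"
proof -
  assume U: "finite U"
  have "ext_mult (ext_scalar c) b U = (\<Sum>S\<in>Pow U. if S = {} then c * b U else 0)"
    unfolding ext_mult_def by (intro sum.cong) (auto simp: ext_scalar_def)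
  also have "\<dots> = c * b U" using U by (simp add: sum.delta)
  finally show ?thesis .
qed

lemma ext_mult_scalar_right: "finite U \<Longrightarrow> ext_mult b (ext_scalar c) U = c * b U"
proof -
  assume U: "finite U"
  have "ext_mult b (ext_scalar c) U = (\<Sum>S\<in>Pow U. if S = U then c * b U else 0)"
    unfolding ext_mult_def by (intro sum.cong) (auto simp: ext_scalar_def)
  also have "\<dots> = c * b U" using U by (simp add: sum.delta)
  finally show ?thesis .
qed

lemma ext_mult_add_left: "ext_mult (ext_add a b) c = ext_add (ext_mult a c) (ext_mult b c)"
  by (simp add: ext_mult_def ext_add_def fun_eq_iff sum.distrib algebra_simps)
lemma ext_mult_add_right: "ext_mult c (ext_add a b) = ext_add (ext_mult c a) (ext_mult c b)"
  by (simp add: ext_mult_def ext_add_def fun_eq_iff sum.distrib algebra_simps)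

instantiation ea :: ring_1
begin
definition "zero_ea = Abs_ea ext_zero"
definition "one_ea = Abs_ea (ext_scalar 1)"
definition "plus_ea a b = Abs_ea (ext_add (Rep_ea a) (Rep_ea b))"
definition "uminus_ea a = Abs_ea (\<lambda>S. - Rep_ea a S)"
definition "minus_ea a b = Abs_ea (\<lambda>S. Rep_ea a S - Rep_ea b S)"
definition "times_ea a b = Abs_ea (ext_mult (Rep_ea a) (Rep_ea b))"

lemma Rep_zero[simp]: "Rep_ea 0 = ext_zero" by (simp add: zero_ea_def Abs_ea_inv)
lemma Rep_one[simp]: "Rep_ea 1 = ext_scalar 1" by (simp add: one_ea_def Abs_ea_inv)
lemma Rep_plus[simp]: "Rep_ea (a + b) = ext_add (Rep_ea a) (Rep_ea b)" by (simp add: plus_ea_def Abs_ea_inv)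
lemma Rep_uminus[simp]: "Rep_ea (- a) = (\<lambda>S. - Rep_ea a S)" by (simp add: uminus_ea_def Abs_ea_inv)
lemma Rep_minus[simp]: "Rep_ea (a - b) = (\<lambda>S. Rep_ea a S - Rep_ea b S)" by (simp add: minus_ea_def Abs_ea_inv)
lemma Rep_times[simp]: "Rep_ea (a * b) = ext_mult (Rep_ea a) (Rep_ea b)" by (simp add: times_ea_def Abs_ea_inv)

instance
proof
  fix a b c :: ea
  show "a * b * c = a * (b * c)" by (rule Rep_ea_eqI) (simp add: ext_mult_assoc)
  show "(a + b) * c = a * c + b * c" by (rule Rep_ea_eqI) (simp add: ext_mult_add_left)
  show "a * (b + c) = a * b + a * c" by (rule Rep_ea_eqI) (simp add: ext_mult_add_right)
  show "a + b + c = a + (b + c)" by (rule Rep_ea_eqI) (simp add: ext_add_def)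
  show "a + b = b + a" by (rule Rep_ea_eqI) (simp add: ext_add_def)
  show "0 + a = a" by (rule Rep_ea_eqI) (simp add: ext_add_def ext_zero_def)
  show "- a + a = 0" by (rule Rep_ea_eqI) (simp add: ext_add_def ext_zero_def)
  show "a - b = a + - b" by (rule Rep_ea_eqI) (simp add: ext_add_def)
  show "1 * a = a"
    by (rule Rep_ea_eqI, case_tac "finite S") (auto simp: ext_mult_scalar_left ext_mult_inf Rep_ea_inf)
  show "a * 1 = a"
    by (rule Rep_ea_eqI, case_tac "finite S") (auto simp: ext_mult_scalar_right ext_mult_inf Rep_ea_inf)
  show "(0::ea) \<noteq> 1"
  proof
    assume "(0::ea) = 1"
    then have "Rep_ea 0 {} = Rep_ea 1 {}" by simp
    then show False by (simp add: ext_zero_def ext_scalar_def)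
  qed
qed
end

definition sc :: "complex \<Rightarrow> ea" where "sc c = Abs_ea (ext_scalar c)"
lemma Rep_sc[simp]: "Rep_ea (sc c) = ext_scalar c" by (simp add: sc_def Abs_ea_inv)

lemma sc_mult_Rep: "Rep_ea (sc c * a) = ext_smult c (Rep_ea a)"
  by (rule ext, case_tac "finite x") (auto simp: ext_mult_scalar_left ext_mult_inf Rep_ea_inf ext_smult_def)
lemma sc_comm: "sc c * a = a * sc c"
  by (rule Rep_ea_eqI, case_tac "finite S") (auto simp: ext_mult_scalar_left ext_mult_scalar_right ext_mult_inf)
lemma sc_mult: "sc (c * d) = sc c * sc d"
proof (rule Rep_ea_eqI)
  fix S show "Rep_ea (sc (c * d)) S = Rep_ea (sc c * sc d) S"
  proof (cases "finite S")
    case True thus ?thesis by (simp add: ext_mult_scalar_left) (simp add: ext_scalar_def)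
  next
    case False thus ?thesis by (simp add: ext_mult_inf) (auto simp add: ext_scalar_def)
  qed
qed
lemma sc_add: "sc (c + d) = sc c + sc d"
  by (rule Rep_ea_eqI) (auto simp: ext_add_def ext_scalar_def)
lemma sc_one[simp]: "sc 1 = 1" by (simp add: sc_def one_ea_def)
lemma sc_zero[simp]: "sc 0 = 0" by (rule Rep_ea_eqI) (simp add: ext_zero_def ext_scalar_def)
lemma sc_uminus: "sc (- c) = - sc c" by (rule Rep_ea_eqI) (auto simp: ext_scalar_def)

lemma sc_of_nat: "sc (of_nat k) = of_nat k"
  by (induction k) (simp_all add: sc_add)
lemma sc_of_int: "sc (of_int k) = of_int k"
  by (cases k rule: int_cases) (simp_all add: sc_of_nat sc_uminus del: of_nat_Suc)

lemma Rep_sum: "Rep_ea (sum f I) = ext_sum (\<lambda>k. Rep_ea (f k)) I"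
proof (induction I rule: infinite_finite_induct)
  case (infinite A) thus ?case by (simp add: ext_sum_def ext_zero_def fun_eq_iff)
next
  case empty thus ?case by (simp add: ext_sum_def ext_zero_def fun_eq_iff)
next
  case (insert x F) thus ?case by (simp add: ext_sum_def ext_add_def fun_eq_iff)
qed


lemma gen_less_total: "s \<noteq> t \<Longrightarrow> gen_less s t \<or> gen_less t s"
  by (cases s; cases t) (auto simp: gen_less_def)
lemma gen_less_asym: "gen_less s t \<Longrightarrow> \<not> gen_less t s"
  by (auto simp: gen_less_def)

lemma card_inv_swap:
  assumes "finite S" "finite T" "S \<inter> T = {}"
  shows "card (inv_set S T) + card (inv_set T S) = card S * card T"
proof -
  define A where "A = {p \<in> S \<times> T. gen_less (snd p) (fst p)}"
  define B where "B = {p \<in> S \<times> T. gen_less (fst p) (snd p)}"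
  have iA: "inv_set S T = A" unfolding A_def inv_set_def by force
  have iB: "inv_set T S = prod.swap ` B" unfolding B_def inv_set_def by force
  have c1: "card (inv_set T S) = card B" unfolding iB by (rule card_image) (simp add: inj_on_def prod.swap_def prod_eq_iff)
  have tot: "fst p \<noteq> snd p" if "p \<in> S \<times> T" for p using that assms(3) by auto
  have "S \<times> T = A \<union> B" unfolding A_def B_def using tot gen_less_total by blast
  moreover have "A \<inter> B = {}" unfolding A_def B_def using gen_less_asym by blast
  moreover have "finite A" "finite B" unfolding A_def B_def using assms by simp_all
  ultimately have "card (S \<times> T) = card A + card B" by (metis card_Un_disjoint)
  then show ?thesis using c1 iA by (simp add: card_cartesian_product)
qed

lemma sign_swap:
  assumes "finite S" "finite T" "S \<inter> T = {}"
  shows "shuffle_sign S T = (-1) ^ (card S * card T) * shuffle_sign T S"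
proof -
  have "(-1::complex) ^ (card S * card T) * shuffle_sign T S
      = (-1) ^ (card (inv_set S T) + card (inv_set T S)) * (-1) ^ card (inv_set T S)"
    using card_inv_swap[OF assms] by (simp add: shuffle_sign_inv)
  also have "\<dots> = (-1) ^ card (inv_set S T) * ((-1) ^ card (inv_set T S) * (-1) ^ card (inv_set T S))"
    by (simp add: power_add)
  also have "\<dots> = shuffle_sign S T" by (simp add: shuffle_sign_inv power_add[symmetric] power_even_eq[symmetric] power_mult[symmetric] mult_2)
  finally show ?thesis by simp
qed

lemma dd_lem: "S \<subseteq> U \<Longrightarrow> U - (U - S) = S" by auto

definition par :: "nat \<Rightarrow> ea \<Rightarrow> bool" where
  "par p a \<longleftrightarrow> (\<forall>S. Rep_ea a S \<noteq> 0 \<longrightarrow> card S mod 2 = p)"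

lemma par_fin: "par p a \<Longrightarrow> Rep_ea a S \<noteq> 0 \<Longrightarrow> finite S"
  using Rep_ea_inf by blast

lemma ext_mult_comm_gen:
  assumes a: "\<And>S. a S \<noteq> 0 \<Longrightarrow> card S mod 2 = p" and b: "\<And>S. b S \<noteq> 0 \<Longrightarrow> card S mod 2 = q"
  shows "ext_mult a b U = (-1) ^ (p * q) * ext_mult b a U"
proof (cases "finite U")
  case False thus ?thesis by (simp add: ext_mult_inf)
next
  case U: True
  have "ext_mult b a U = (\<Sum>S\<in>Pow U. b (U - S) * a (U - (U - S)) * shuffle_sign (U - S) (U - (U - S)))"
    unfolding ext_mult_def
    by (rule sum.reindex_bij_witness[where i="\<lambda>S. U - S" and j="\<lambda>S. U - S"]) (auto simp: dd_lem)
  also have "\<dots> = (\<Sum>S\<in>Pow U. b (U - S) * a S * shuffle_sign (U - S) S)"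
    by (intro sum.cong refl) (auto simp: dd_lem)
  finally have e: "ext_mult b a U = \<dots>" .
  have "ext_mult a b U = (\<Sum>S\<in>Pow U. (-1) ^ (p * q) * (b (U - S) * a S * shuffle_sign (U - S) S))"
    unfolding ext_mult_def
  proof (intro sum.cong refl)
    fix S assume S: "S \<in> Pow U"
    show "a S * b (U - S) * shuffle_sign S (U - S) = (-1) ^ (p * q) * (b (U - S) * a S * shuffle_sign (U - S) S)"
    proof (cases "a S = 0 \<or> b (U - S) = 0")
      case True thus ?thesis by auto
    next
      case False
      then have cs: "card S mod 2 = p" "card (U - S) mod 2 = q" using a b by auto
      have fin: "finite S" "finite (U - S)" using S U finite_subset by auto
      have "shuffle_sign S (U - S) = (-1) ^ (card S * card (U - S)) * shuffle_sign (U - S) S"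
        by (rule sign_swap) (use fin in auto)
      moreover have "(-1::complex) ^ (card S * card (U - S)) = (-1) ^ (p * q)"
      proof -
        have "(card S * card (U - S)) mod 2 = (p * q) mod 2" using cs by (metis mod_mult_eq)
        then have "even (card S * card (U - S)) = even (p * q)" by (metis even_iff_mod_2_eq_zero)
        then show ?thesis by (simp add: minus_one_power_iff)
      qed
      ultimately show ?thesis by simp
    qed
  qed
  then show ?thesis using e by (simp add: sum_distrib_left)
qed

lemma par_comm: "par 0 a \<Longrightarrow> a * b = b * a"
proof (rule Rep_ea_eqI)
  fix U assume a: "par 0 a"
  have "Rep_ea (a * b) U = Rep_ea (b * a) U" for U
  proof (cases "finite U")
    case False thus ?thesis by (simp add: ext_mult_inf)
  next
    case U: True
    have "ext_mult (Rep_ea b) (Rep_ea a) U = (\<Sum>S\<in>Pow U. Rep_ea b (U - S) * Rep_ea a (U - (U - S)) * shuffle_sign (U - S) (U - (U - S)))"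
      unfolding ext_mult_def
      by (rule sum.reindex_bij_witness[where i="\<lambda>S. U - S" and j="\<lambda>S. U - S"]) (auto simp: dd_lem)
    also have "\<dots> = (\<Sum>S\<in>Pow U. Rep_ea b (U - S) * Rep_ea a S * shuffle_sign (U - S) S)"
      by (intro sum.cong refl) (auto simp: dd_lem)
    finally have e: "ext_mult (Rep_ea b) (Rep_ea a) U = \<dots>" .
    have "ext_mult (Rep_ea a) (Rep_ea b) U = (\<Sum>S\<in>Pow U. Rep_ea b (U - S) * Rep_ea a S * shuffle_sign (U - S) S)"
      unfolding ext_mult_def
    proof (intro sum.cong refl)
      fix S assume S: "S \<in> Pow U"
      show "Rep_ea a S * Rep_ea b (U - S) * shuffle_sign S (U - S) = Rep_ea b (U - S) * Rep_ea a S * shuffle_sign (U - S) S"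
      proof (cases "Rep_ea a S = 0")
        case True thus ?thesis by auto
      next
        case False
        then have cs: "even (card S)" using a by (auto simp: par_def)
        have fin: "finite S" "finite (U - S)" using S U finite_subset by auto
        have "shuffle_sign S (U - S) = (-1) ^ (card S * card (U - S)) * shuffle_sign (U - S) S"
          by (rule sign_swap) (use fin in auto)
        moreover have "(-1::complex) ^ (card S * card (U - S)) = 1" using cs by (simp add: minus_one_power_iff)
        ultimately show ?thesis by simp
      qed
    qed
    then show ?thesis using e by simp
  qed
  then show "Rep_ea (a * b) U = Rep_ea (b * a) U" .
qed

lemma par_anticomm: "par 1 a \<Longrightarrow> par 1 b \<Longrightarrow> a * b = - (b * a)"
proof (rule Rep_ea_eqI)
  fix U assume a: "par 1 a" and b: "par 1 b"
  have "ext_mult (Rep_ea a) (Rep_ea b) U = (-1) ^ (1 * 1) * ext_mult (Rep_ea b) (Rep_ea a) U"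
    by (rule ext_mult_comm_gen) (use a b in \<open>auto simp: par_def\<close>)
  then show "Rep_ea (a * b) U = Rep_ea (- (b * a)) U" by simp
qed

lemma par_mult: "par p a \<Longrightarrow> par q b \<Longrightarrow> par ((p + q) mod 2) (a * b)"
  unfolding par_def
proof (intro allI impI)
  fix U assume a: "\<forall>S. Rep_ea a S \<noteq> 0 \<longrightarrow> card S mod 2 = p" and b: "\<forall>S. Rep_ea b S \<noteq> 0 \<longrightarrow> card S mod 2 = q"
    and ne: "Rep_ea (a * b) U \<noteq> 0"
  have U: "finite U"
  proof (rule ccontr)
    assume "infinite U" then have "Rep_ea (a * b) U = 0" by (simp add: ext_mult_inf)
    with ne show False by simp
  qed
  from ne have "(\<Sum>S\<in>Pow U. Rep_ea a S * Rep_ea b (U - S) * shuffle_sign S (U - S)) \<noteq> 0"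
    by (simp add: ext_mult_def)
  then obtain S where S: "S \<in> Pow U" "Rep_ea a S * Rep_ea b (U - S) * shuffle_sign S (U - S) \<noteq> 0"
    using sum.not_neutral_contains_not_neutral by blast
  then have "card S mod 2 = p" "card (U - S) mod 2 = q" using a b by auto
  moreover have "card U = card S + card (U - S)"
  proof -
    have "S \<subseteq> U" using S by simp
    then have "card (U - S) = card U - card S" "card S \<le> card U" using U
      by (simp_all add: card_Diff_subset finite_subset card_mono)
    then show ?thesis by simp
  qed
  ultimately show "card U mod 2 = (p + q) mod 2" using mod_add_eq[of "card S" 2 "card (U - S)"] by simp
qed

lemma par_add: "par p a \<Longrightarrow> par p b \<Longrightarrow> par p (a + b)"
  unfolding par_def by (auto simp: ext_add_def) (metis add.right_neutral add_0)
lemma par_uminus: "par p a \<Longrightarrow> par p (- a)"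
  by (auto simp: par_def)
lemma par_zero[simp]: "par p 0" by (auto simp: par_def ext_zero_def)
lemma par_sum: "(\<And>k. k \<in> I \<Longrightarrow> par p (f k)) \<Longrightarrow> par p (sum f I)"
  by (induction I rule: infinite_finite_induct) (auto intro: par_add)
lemma par_sc: "par 0 (sc c)" by (auto simp: par_def ext_scalar_def)

definition gen :: "nat \<Rightarrow> nat \<Rightarrow> ea" where "gen i j = Abs_ea (ext_gen i j)"
lemma Rep_gen[simp]: "Rep_ea (gen i j) = ext_gen i j" by (simp add: gen_def Abs_ea_inv)
lemma par_gen: "par 1 (gen i j)" by (auto simp: par_def ext_gen_def)


type_synonym 'a mt = "nat \<Rightarrow> nat \<Rightarrow> 'a"

definition mm :: "nat \<Rightarrow> 'a::semiring_0 mt \<Rightarrow> 'a mt \<Rightarrow> 'a mt" where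
  "mm n A B = (\<lambda>i j. if i < n \<and> j < n then (\<Sum>k<n. A i k * B k j) else 0)"

definition tr :: "nat \<Rightarrow> 'a::comm_monoid_add mt \<Rightarrow> 'a" where
  "tr n A = (\<Sum>i<n. A i i)"

definition psum :: "nat \<Rightarrow> nat \<Rightarrow> (nat \<Rightarrow> nat) \<Rightarrow> (nat \<Rightarrow> 'a::comm_ring_1 mt) \<Rightarrow> 'a" where
  "psum n m \<sigma> F = (\<Sum>i\<in>{..<m} \<rightarrow>\<^sub>E {..<n}. \<Prod>k<m. F k (i k) (i (\<sigma> k)))"

definition D :: "nat \<Rightarrow> 'a::comm_ring_1 mt list \<Rightarrow> 'a" where
  "D n As = (\<Sum>\<sigma>\<in>{\<sigma>. \<sigma> permutes {..<length As}}. of_int (sign \<sigma>) * psum n (length As) \<sigma> (\<lambda>k. As ! k))"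

lemma isum_split:
  "(\<Sum>i\<in>{..<Suc m} \<rightarrow>\<^sub>E {..<n}. F i) = (\<Sum>j\<in>{..<m} \<rightarrow>\<^sub>E {..<n}. \<Sum>c<n. F (j(m := c)))"
proof -
  have "{..<Suc m} \<rightarrow>\<^sub>E {..<n} = (\<lambda>(y, g). g(m := y)) ` ({..<n} \<times> ({..<m} \<rightarrow>\<^sub>E {..<n}))"
    unfolding lessThan_Suc by (rule PiE_insert_eq)
  moreover have "inj_on (\<lambda>(y, g). g(m := y)) ({..<n} \<times> ({..<m} \<rightarrow>\<^sub>E {..<n}))"
    by (rule inj_combinator) simp
  ultimately have "(\<Sum>i\<in>{..<Suc m} \<rightarrow>\<^sub>E {..<n}. F i) = (\<Sum>p\<in>{..<n} \<times> ({..<m} \<rightarrow>\<^sub>E {..<n}). F ((\<lambda>(y, g). g(m := y)) p))"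
    by (simp add: sum.reindex)
  also have "\<dots> = (\<Sum>c<n. \<Sum>j\<in>{..<m} \<rightarrow>\<^sub>E {..<n}. F (j(m := c)))"
    by (simp add: sum.cartesian_product split_def)
  also have "\<dots> = (\<Sum>j\<in>{..<m} \<rightarrow>\<^sub>E {..<n}. \<Sum>c<n. F (j(m := c)))"
    by (rule sum.swap)
  finally show ?thesis .
qed

lemma psum_fix:
  fixes As :: "'a::comm_ring_1 mt list"
  assumes q: "q permutes {..<length As}"
  shows "psum n (Suc (length As)) q (\<lambda>k. (As @ [M]) ! k) = tr n M * psum n (length As) q (\<lambda>k. As ! k)"
proof -
  let ?m = "length As"
  have qm: "q ?m = ?m" using q by (simp add: permutes_not_in)
  have qk: "q k < ?m" if "k < ?m" for k using q that permutes_in_image by fastforce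
  have "psum n (Suc ?m) q (\<lambda>k. (As @ [M]) ! k) =
    (\<Sum>j\<in>{..<?m} \<rightarrow>\<^sub>E {..<n}. \<Sum>c<n. \<Prod>k<Suc ?m. ((As @ [M]) ! k) ((j(?m := c)) k) ((j(?m := c)) (q k)))"
    unfolding psum_def by (rule isum_split)
  also have "\<dots> = (\<Sum>j\<in>{..<?m} \<rightarrow>\<^sub>E {..<n}. \<Sum>c<n. (\<Prod>k<?m. (As ! k) (j k) (j (q k))) * M c c)"
  proof (intro sum.cong refl)
    fix j c
    have "(\<Prod>k<?m. ((As @ [M]) ! k) ((j(?m := c)) k) ((j(?m := c)) (q k))) = (\<Prod>k<?m. (As ! k) (j k) (j (q k)))"
      by (intro prod.cong refl) (auto simp: nth_append qk dest: qk)
    then show "(\<Prod>k<Suc ?m. ((As @ [M]) ! k) ((j(?m := c)) k) ((j(?m := c)) (q k))) = (\<Prod>k<?m. (As ! k) (j k) (j (q k))) * M c c"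
      by (simp add: qm)
  qed
  also have "\<dots> = tr n M * psum n ?m q (\<lambda>k. As ! k)"
    by (simp add: psum_def tr_def sum_distrib_left sum_distrib_right mult.commute)
  finally show ?thesis .
qed

lemma psum_move:
  fixes As :: "'a::comm_ring_1 mt list"
  assumes q: "q permutes {..<length As}" and a: "a < length As"
  shows "psum n (Suc (length As)) (Transposition.transpose (length As) (q a) \<circ> q) (\<lambda>k. (As @ [M]) ! k)
       = psum n (length As) q (\<lambda>k. (As[a := mm n (As ! a) M]) ! k)"
proof -
  let ?m = "length As"
  let ?s = "Transposition.transpose ?m (q a) \<circ> q"
  have qm: "q ?m = ?m" using q by (simp add: permutes_not_in)
  have qk: "q k < ?m" if "k < ?m" for k using q that permutes_in_image by fastforce
  have qinj: "q k = q a \<longleftrightarrow> k = a" for k using q by (meson permutes_inj injD)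
  have sm: "?s ?m = q a" using qm by simp
  have sa: "?s a = ?m" by simp
  have sk: "Transposition.transpose ?m (q a) (q k) = q k" if "k < ?m" "k \<noteq> a" for k using qk[OF that(1)] qinj[of k] that by auto
  have "psum n (Suc ?m) ?s (\<lambda>k. (As @ [M]) ! k) =
    (\<Sum>j\<in>{..<?m} \<rightarrow>\<^sub>E {..<n}. \<Sum>c<n. \<Prod>k<Suc ?m. ((As @ [M]) ! k) ((j(?m := c)) k) ((j(?m := c)) (?s k)))"
    unfolding psum_def by (rule isum_split)
  also have "\<dots> = (\<Sum>j\<in>{..<?m} \<rightarrow>\<^sub>E {..<n}. \<Prod>k<?m. ((As[a := mm n (As ! a) M]) ! k) (j k) (j (q k)))"
  proof (intro sum.cong refl)
    fix j assume j: "j \<in> {..<?m} \<rightarrow>\<^sub>E {..<n}"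
    have ja: "j a < n" "j (q a) < n" using j a qk[OF a] by auto
    define R where "R = (\<Prod>k\<in>{..<?m} - {a}. (As ! k) (j k) (j (q k)))"
    have fin: "finite ({..<?m} - {a})" by simp
    have "(\<Sum>c<n. \<Prod>k<Suc ?m. ((As @ [M]) ! k) ((j(?m := c)) k) ((j(?m := c)) (?s k)))
        = (\<Sum>c<n. ((As ! a) (j a) c * M c (j (q a))) * R)"
    proof (intro sum.cong refl)
      fix c
      have "(\<Prod>k<Suc ?m. ((As @ [M]) ! k) ((j(?m := c)) k) ((j(?m := c)) (?s k)))
          = (\<Prod>k<?m. ((As @ [M]) ! k) ((j(?m := c)) k) ((j(?m := c)) (?s k))) * M c (j (q a))"
        using sm qk[OF a] by simp
      also have "(\<Prod>k<?m. ((As @ [M]) ! k) ((j(?m := c)) k) ((j(?m := c)) (?s k)))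
          = ((As @ [M]) ! a) ((j(?m := c)) a) ((j(?m := c)) (?s a)) *
            (\<Prod>k\<in>{..<?m} - {a}. ((As @ [M]) ! k) ((j(?m := c)) k) ((j(?m := c)) (?s k)))"
        using a by (subst prod.remove[of _ a]) auto
      also have "(\<Prod>k\<in>{..<?m} - {a}. ((As @ [M]) ! k) ((j(?m := c)) k) ((j(?m := c)) (?s k))) = R"
        unfolding R_def by (intro prod.cong refl) (auto simp: nth_append sk dest: qk)
      finally show "(\<Prod>k<Suc ?m. ((As @ [M]) ! k) ((j(?m := c)) k) ((j(?m := c)) (?s k))) = ((As ! a) (j a) c * M c (j (q a))) * R"
        using a by (simp add: nth_append sa mult.commute mult.left_commute)
    qed
    also have "\<dots> = mm n (As ! a) M (j a) (j (q a)) * R"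
      using ja by (simp add: mm_def sum_distrib_right)
    also have "\<dots> = (\<Prod>k<?m. ((As[a := mm n (As ! a) M]) ! k) (j k) (j (q k)))"
    proof -
      have "(\<Prod>k<?m. ((As[a := mm n (As ! a) M]) ! k) (j k) (j (q k)))
          = ((As[a := mm n (As ! a) M]) ! a) (j a) (j (q a)) * (\<Prod>k\<in>{..<?m} - {a}. ((As[a := mm n (As ! a) M]) ! k) (j k) (j (q k)))"
        using a by (subst prod.remove[of _ a]) auto
      also have "(\<Prod>k\<in>{..<?m} - {a}. ((As[a := mm n (As ! a) M]) ! k) (j k) (j (q k))) = R"
        unfolding R_def by (intro prod.cong refl) auto
      finally show ?thesis using a by simp
    qed
    finally show "(\<Sum>c<n. \<Prod>k<Suc ?m. ((As @ [M]) ! k) ((j(?m := c)) k) ((j(?m := c)) (?s k))) =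
      (\<Prod>k<?m. ((As[a := mm n (As ! a) M]) ! k) (j k) (j (q k)))" .
  qed
  also have "\<dots> = psum n ?m q (\<lambda>k. (As[a := mm n (As ! a) M]) ! k)" by (simp add: psum_def)
  finally show ?thesis .
qed

lemma D_snoc:
  fixes As :: "'a::comm_ring_1 mt list"
  shows "D n (As @ [M]) = tr n M * D n As - (\<Sum>a<length As. D n (As[a := mm n (As ! a) M]))"
proof -
  let ?m = "length As"
  let ?f = "\<lambda>\<sigma>. of_int (sign \<sigma>) * psum n (Suc ?m) \<sigma> (\<lambda>k. (As @ [M]) ! k) :: 'a"
  let ?P = "{q. q permutes {..<?m}}"
  have "D n (As @ [M]) = sum ?f {\<sigma>. \<sigma> permutes insert ?m {..<?m}}"
    by (simp add: D_def lessThan_Suc)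
  also have "\<dots> = (\<Sum>b\<in>insert ?m {..<?m}. \<Sum>q\<in>?P. ?f (Transposition.transpose ?m b \<circ> q))"
    by (rule sum_over_permutations_insert) auto
  also have "\<dots> = (\<Sum>q\<in>?P. ?f q) + (\<Sum>b<?m. \<Sum>q\<in>?P. ?f (Transposition.transpose ?m b \<circ> q))"
    by (simp add: sum.insert)
  also have "(\<Sum>q\<in>?P. ?f q) = tr n M * D n As"
    by (simp add: D_def sum_distrib_left psum_fix mult.left_commute)
  also have "(\<Sum>b<?m. \<Sum>q\<in>?P. ?f (Transposition.transpose ?m b \<circ> q))
      = (\<Sum>q\<in>?P. \<Sum>b<?m. ?f (Transposition.transpose ?m b \<circ> q))"
    by (rule sum.swap)
  also have "\<dots> = (\<Sum>q\<in>?P. \<Sum>a<?m. - (of_int (sign q) * psum n ?m q (\<lambda>k. (As[a := mm n (As ! a) M]) ! k)))"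
  proof (rule sum.cong[OF refl])
    fix q assume "q \<in> ?P"
    then have q: "q permutes {..<?m}" by simp
    have "(\<Sum>b<?m. ?f (Transposition.transpose ?m b \<circ> q)) = (\<Sum>a<?m. ?f (Transposition.transpose ?m (q a) \<circ> q))"
    proof -
      have "inj_on q {..<?m}" using q permutes_inj_on by blast
      moreover have "q ` {..<?m} = {..<?m}" using q permutes_image by blast
      ultimately show ?thesis
        by (metis (no_types, lifting) sum.reindex_cong)
    qed
    also have "\<dots> = (\<Sum>a<?m. - (of_int (sign q) * psum n ?m q (\<lambda>k. (As[a := mm n (As ! a) M]) ! k)))"
    proof (rule sum.cong[OF refl])
      fix a assume a: "a \<in> {..<?m}"
      have qa: "q a < ?m" using a q permutes_in_image by fastforce
      have pq: "permutation q" using q permutation_permutes by blast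
      have "sign (Transposition.transpose ?m (q a) \<circ> q) = - sign q"
        using qa by (simp add: sign_compose permutation_swap_id pq sign_swap_id)
      then show "?f (Transposition.transpose ?m (q a) \<circ> q) = - (of_int (sign q) * psum n ?m q (\<lambda>k. (As[a := mm n (As ! a) M]) ! k))"
        using psum_move[OF q, of a n M] a by simp
    qed
    finally show "(\<Sum>b<?m. ?f (Transposition.transpose ?m b \<circ> q)) = (\<Sum>a<?m. - (of_int (sign q) * psum n ?m q (\<lambda>k. (As[a := mm n (As ! a) M]) ! k)))" .
  qed
  also have "\<dots> = - (\<Sum>a<?m. D n (As[a := mm n (As ! a) M]))"
    by (subst sum.swap) (simp add: D_def sum_negf)
  finally show ?thesis by simp
qed

lemma psum_perm:
  fixes F :: "nat \<Rightarrow> 'a::comm_ring_1 mt"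
  assumes p: "p permutes {..<m}" and sp: "s permutes {..<m}"
  shows "psum n m (inv p \<circ> s \<circ> p) (\<lambda>k. F (p k)) = psum n m s F"
proof -
  have pk: "p k < m \<longleftrightarrow> k < m" for k using p permutes_in_image by fastforce
  have sk: "s k < m \<longleftrightarrow> k < m" for k using sp permutes_in_image by fastforce
  have ip: "inv p permutes {..<m}" using p permutes_inv by blast
  have ipk: "inv p k < m \<longleftrightarrow> k < m" for k using ip permutes_in_image by fastforce
  have "psum n m (inv p \<circ> s \<circ> p) (\<lambda>k. F (p k)) = (\<Sum>i\<in>{..<m} \<rightarrow>\<^sub>E {..<n}. \<Prod>k<m. F (p k) (i k) (i (inv p (s (p k)))))"
    by (simp add: psum_def)
  also have "\<dots> = (\<Sum>i\<in>{..<m} \<rightarrow>\<^sub>E {..<n}. \<Prod>k<m. F (p k) (i (inv p (p k))) (i (inv p (s (p k)))))"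
    using p by (simp add: permutes_inverses)
  also have "\<dots> = (\<Sum>i\<in>{..<m} \<rightarrow>\<^sub>E {..<n}. \<Prod>k<m. F k (i (inv p k)) (i (inv p (s k))))"
  proof (rule sum.cong[OF refl])
    fix i
    define G where "G = (\<lambda>k. F k (i (inv p k)) (i (inv p (s k))))"
    have "prod G (p ` {..<m}) = prod (G \<circ> p) {..<m}"
      by (rule prod.reindex) (rule permutes_inj_on[OF p])
    then have "prod (G \<circ> p) {..<m} = prod G {..<m}" by (simp only: permutes_image[OF p])
    then show "(\<Prod>k<m. F (p k) (i (inv p (p k))) (i (inv p (s (p k))))) = (\<Prod>k<m. F k (i (inv p k)) (i (inv p (s k))))"
      by (simp add: G_def o_def)
  qed
  also have "\<dots> = (\<Sum>i\<in>{..<m} \<rightarrow>\<^sub>E {..<n}. \<Prod>k<m. F k (i k) (i (s k)))"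
  proof (rule sum.reindex_bij_witness[where i="\<lambda>i. restrict (i \<circ> p) {..<m}" and j="\<lambda>i. restrict (i \<circ> inv p) {..<m}"])
    fix i assume i: "i \<in> {..<m} \<rightarrow>\<^sub>E {..<n}"
    show "restrict (restrict (i \<circ> inv p) {..<m} \<circ> p) {..<m} = i"
    proof
      fix k show "restrict (restrict (i \<circ> inv p) {..<m} \<circ> p) {..<m} k = i k"
      proof (cases "k < m")
        case True then have "p k < m" using pk by simp
        then show ?thesis using True by (simp add: permutes_inverses[OF p])
      next
        case False
        then have "i k = undefined" using PiE_arb[OF i, of k] by simp
        then show ?thesis using False by simp
      qed
    qed
    show "restrict (i \<circ> inv p) {..<m} \<in> {..<m} \<rightarrow>\<^sub>E {..<n}"
      unfolding restrict_PiE_iff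
    proof
      fix k assume "k \<in> {..<m}" then have "inv p k < m" using ipk by simp
      then show "(i \<circ> inv p) k \<in> {..<n}" using i by auto
    qed
    show "(\<Prod>k<m. F k (restrict (i \<circ> inv p) {..<m} k) (restrict (i \<circ> inv p) {..<m} (s k))) = (\<Prod>k<m. F k (i (inv p k)) (i (inv p (s k))))"
      by (intro prod.cong refl) (auto simp: sk)
  next
    fix i assume i: "i \<in> {..<m} \<rightarrow>\<^sub>E {..<n}"
    show "restrict (restrict (i \<circ> p) {..<m} \<circ> inv p) {..<m} = i"
    proof
      fix k show "restrict (restrict (i \<circ> p) {..<m} \<circ> inv p) {..<m} k = i k"
      proof (cases "k < m")
        case True then have "inv p k < m" using ipk by simp
        then show ?thesis using True by (simp add: permutes_inverses[OF p])
      next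
        case False
        then have "i k = undefined" using PiE_arb[OF i, of k] by simp
        then show ?thesis using False by simp
      qed
    qed
    show "restrict (i \<circ> p) {..<m} \<in> {..<m} \<rightarrow>\<^sub>E {..<n}"
      unfolding restrict_PiE_iff
    proof
      fix k assume "k \<in> {..<m}" then have "p k < m" using pk by simp
      then show "(i \<circ> p) k \<in> {..<n}" using i by auto
    qed
  qed
  also have "\<dots> = psum n m s F" by (simp add: psum_def)
  finally show ?thesis .
qed

lemma D_perm:
  fixes As :: "'a::comm_ring_1 mt list"
  assumes p: "p permutes {..<length As}"
  shows "D n (map (\<lambda>k. As ! p k) [0..<length As]) = D n As"
proof -
  let ?m = "length As"
  have pk: "p k < ?m \<longleftrightarrow> k < ?m" for k using p permutes_in_image by fastforce
  have ip: "inv p permutes {..<?m}" using p permutes_inv by blast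
  have pp: "permutation p" "permutation (inv p)" using p ip permutation_permutes by blast+
  have "D n (map (\<lambda>k. As ! p k) [0..<?m]) = (\<Sum>\<sigma>\<in>{\<sigma>. \<sigma> permutes {..<?m}}. of_int (sign \<sigma>) * psum n ?m \<sigma> (\<lambda>k. As ! p k))"
    unfolding D_def by (intro sum.cong) (auto simp: psum_def)
  also have "\<dots> = (\<Sum>\<sigma>\<in>{\<sigma>. \<sigma> permutes {..<?m}}. of_int (sign \<sigma>) * psum n ?m \<sigma> (\<lambda>k. As ! k))"
  proof (rule sum.reindex_bij_witness[where i="\<lambda>s. inv p \<circ> s \<circ> p" and j="\<lambda>s. p \<circ> s \<circ> inv p"])
    fix s assume "s \<in> {\<sigma>. \<sigma> permutes {..<?m}}"
    then have s: "s permutes {..<?m}" by simp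
    show "inv p \<circ> (p \<circ> s \<circ> inv p) \<circ> p = s"
      using p by (simp add: fun_eq_iff permutes_inverses)
    show "p \<circ> s \<circ> inv p \<in> {\<sigma>. \<sigma> permutes {..<?m}}"
      using s p ip by (simp only: mem_Collect_eq) (meson permutes_compose)
    have ps: "permutation s" using s permutation_permutes by blast
    have "sign (p \<circ> s \<circ> inv p) = sign s"
      using pp ps by (simp add: sign_compose permutation_compose sign_inverse)
    moreover have "psum n ?m (inv p \<circ> (p \<circ> s \<circ> inv p) \<circ> p) (\<lambda>k. As ! p k) = psum n ?m (p \<circ> s \<circ> inv p) (\<lambda>k. As ! k)"
      by (rule psum_perm[OF p]) (use s p ip in \<open>meson permutes_compose\<close>)
    moreover have "inv p \<circ> (p \<circ> s \<circ> inv p) \<circ> p = s" using p by (simp add: fun_eq_iff permutes_inverses)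
    ultimately show "of_int (sign (p \<circ> s \<circ> inv p)) * psum n ?m (p \<circ> s \<circ> inv p) (\<lambda>k. As ! k) = of_int (sign s) * psum n ?m s (\<lambda>k. As ! p k)"
      by simp
  next
    fix s assume "s \<in> {\<sigma>. \<sigma> permutes {..<?m}}"
    then have s: "s permutes {..<?m}" by simp
    show "p \<circ> (inv p \<circ> s \<circ> p) \<circ> inv p = s"
      using p by (simp add: fun_eq_iff permutes_inverses)
    show "inv p \<circ> s \<circ> p \<in> {\<sigma>. \<sigma> permutes {..<?m}}"
      using s p ip by (simp only: mem_Collect_eq) (meson permutes_compose)
  qed
  also have "\<dots> = D n As" by (simp add: D_def)
  finally show ?thesis .
qed


lemma sum_sign_inv:
  fixes g :: "(nat \<Rightarrow> nat) \<Rightarrow> 'b::comm_ring_1"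
  assumes P: "finite P" and pq: "p \<in> P" "q \<in> P" "p \<noteq> q"
    and inv: "\<And>\<sigma>. \<sigma> permutes P \<Longrightarrow> g (Transposition.transpose p q \<circ> \<sigma>) = g \<sigma>"
  shows "(\<Sum>\<sigma>\<in>{\<sigma>. \<sigma> permutes P}. of_int (sign \<sigma>) * g \<sigma>) = 0"
proof -
  let ?t = "Transposition.transpose p q"
  let ?A = "{\<sigma>. \<sigma> permutes P \<and> evenperm \<sigma>}"
  let ?B = "{\<sigma>. \<sigma> permutes P \<and> \<not> evenperm \<sigma>}"
  have fin: "finite {\<sigma>. \<sigma> permutes P}" by (rule finite_permutations[OF P])
  have tp: "?t permutes P" by (rule permutes_swap_id[OF pq(1,2)])
  have ptt: "permutation ?t" by (rule permutation_swap_id)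
  have ev: "evenperm (?t \<circ> \<sigma>) \<longleftrightarrow> \<not> evenperm \<sigma>" if "\<sigma> permutes P" for \<sigma>
  proof -
    have ps: "permutation \<sigma>" using that P permutation_permutes by blast
    have "\<not> evenperm ?t" using evenperm_swap[of p q] pq(3) by simp
    then show ?thesis using evenperm_comp[OF ptt ps] by simp
  qed
  have split: "{\<sigma>. \<sigma> permutes P} = ?A \<union> ?B" by blast
  have "(\<Sum>\<sigma>\<in>{\<sigma>. \<sigma> permutes P}. of_int (sign \<sigma>) * g \<sigma>) = (\<Sum>\<sigma>\<in>?A. of_int (sign \<sigma>) * g \<sigma>) + (\<Sum>\<sigma>\<in>?B. of_int (sign \<sigma>) * g \<sigma>)"
    by (subst split, rule sum.union_disjoint) (use fin in auto)
  also have "(\<Sum>\<sigma>\<in>?B. of_int (sign \<sigma>) * g \<sigma>) = (\<Sum>\<sigma>\<in>?A. - (of_int (sign \<sigma>) * g \<sigma>))"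
  proof (rule sum.reindex_bij_witness[where i="\<lambda>\<sigma>. ?t \<circ> \<sigma>" and j="\<lambda>\<sigma>. ?t \<circ> \<sigma>"])
    fix s assume s: "s \<in> ?B"
    show "?t \<circ> (?t \<circ> s) = s" by (simp add: comp_assoc[symmetric])
    show "?t \<circ> s \<in> ?A" using s ev tp permutes_compose by blast
    have "evenperm (?t \<circ> s)" using s ev by blast
    then show "- (of_int (sign (?t \<circ> s)) * g (?t \<circ> s)) = of_int (sign s) * g s"
      using s inv[of s] by (simp add: sign_def)
  next
    fix s assume s: "s \<in> ?A"
    show "?t \<circ> (?t \<circ> s) = s" by (simp add: comp_assoc[symmetric])
    show "?t \<circ> s \<in> ?B" using s ev tp permutes_compose by blast
  qed
  finally show ?thesis by (simp add: sum_negf)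
qed

lemma pigeon:
  fixes h :: "(nat \<Rightarrow> nat) \<Rightarrow> (nat \<Rightarrow> nat) \<Rightarrow> 'b::comm_ring_1"
  assumes nm: "n < m"
  shows "(\<Sum>\<sigma>\<in>{\<sigma>. \<sigma> permutes {..<m}}. \<Sum>i\<in>{..<m} \<rightarrow>\<^sub>E {..<n}. of_int (sign \<sigma>) * h i (i \<circ> \<sigma>)) = 0"
proof -
  have "(\<Sum>\<sigma>\<in>{\<sigma>. \<sigma> permutes {..<m}}. \<Sum>i\<in>{..<m} \<rightarrow>\<^sub>E {..<n}. of_int (sign \<sigma>) * h i (i \<circ> \<sigma>))
      = (\<Sum>i\<in>{..<m} \<rightarrow>\<^sub>E {..<n}. \<Sum>\<sigma>\<in>{\<sigma>. \<sigma> permutes {..<m}}. of_int (sign \<sigma>) * h i (i \<circ> \<sigma>))"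
    by (rule sum.swap)
  also have "\<dots> = 0"
  proof (rule sum.neutral, rule ballI)
    fix i assume i: "i \<in> {..<m} \<rightarrow>\<^sub>E {..<n}"
    have "\<not> inj_on i {..<m}"
    proof
      assume "inj_on i {..<m}"
      moreover have "i ` {..<m} \<subseteq> {..<n}" using i by auto
      ultimately have "card {..<m} \<le> card {..<n}" by (intro card_inj_on_le) auto
      with nm show False by simp
    qed
    then obtain p q where pq: "p \<in> {..<m}" "q \<in> {..<m}" "p \<noteq> q" "i p = i q"
      unfolding inj_on_def by blast
    have it: "i \<circ> Transposition.transpose p q = i"
    proof
      fix x show "(i \<circ> Transposition.transpose p q) x = i x"
        using pq(4) by (cases "x = p"; cases "x = q") auto
    qed
    show "(\<Sum>\<sigma>\<in>{\<sigma>. \<sigma> permutes {..<m}}. of_int (sign \<sigma>) * h i (i \<circ> \<sigma>)) = 0"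
    proof (rule sum_sign_inv[OF _ pq(1-3)])
      fix \<sigma> show "h i (i \<circ> (Transposition.transpose p q \<circ> \<sigma>)) = h i (i \<circ> \<sigma>)"
        by (simp add: comp_assoc[symmetric] it)
    qed simp
  qed
  finally show ?thesis .
qed

lemma D_zero:
  fixes As :: "'a::comm_ring_1 mt list"
  assumes "n < length As"
  shows "D n As = 0"
proof -
  have "D n As = (\<Sum>\<sigma>\<in>{\<sigma>. \<sigma> permutes {..<length As}}. \<Sum>i\<in>{..<length As} \<rightarrow>\<^sub>E {..<n}.
       of_int (sign \<sigma>) * (\<lambda>i j. \<Prod>k<length As. (As ! k) (i k) (j k)) i (i \<circ> \<sigma>))"
    by (simp add: D_def psum_def sum_distrib_left)
  also have "\<dots> = 0" by (rule pigeon[OF assms])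
  finally show ?thesis .
qed

lemma D_Nil: "D n [] = 1"
  by (simp add: D_def psum_def)


definition mI :: "nat \<Rightarrow> 'a::semiring_1 mt" where
  "mI n = (\<lambda>i j. if i < n \<and> i = j then 1 else 0)"

primrec mp :: "nat \<Rightarrow> 'a::semiring_1 mt \<Rightarrow> nat \<Rightarrow> 'a mt" where
  "mp n A 0 = mI n"
| "mp n A (Suc k) = mm n (mp n A k) A"

definition bd :: "nat \<Rightarrow> 'a::zero mt \<Rightarrow> bool" where
  "bd n A \<longleftrightarrow> (\<forall>i j. \<not> (i < n \<and> j < n) \<longrightarrow> A i j = 0)"

lemma mm_assoc: "mm n (mm n A B) C = mm n A (mm n B C)"
proof (intro ext)
  fix i j
  show "mm n (mm n A B) C i j = mm n A (mm n B C) i j"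
  proof (cases "i < n \<and> j < n")
    case True
    have "mm n (mm n A B) C i j = (\<Sum>k<n. (\<Sum>l<n. A i l * B l k) * C k j)"
      using True by (simp add: mm_def)
    also have "\<dots> = (\<Sum>l<n. A i l * (\<Sum>k<n. B l k * C k j))"
      by (simp add: sum_distrib_left sum_distrib_right mult.assoc) (rule sum.swap)
    also have "\<dots> = mm n A (mm n B C) i j" using True by (simp add: mm_def)
    finally show ?thesis .
  next
    case False thus ?thesis by (simp only: mm_def if_not_P[OF False] if_False)
  qed
qed

lemma mm_mI_left: "mm n (mI n) A = (\<lambda>i j. if i < n \<and> j < n then A i j else 0)"
proof (intro ext)
  fix i j
  have "i < n \<Longrightarrow> (\<Sum>k<n. mI n i k * A k j) = (\<Sum>k<n. if k = i then A k j else 0)"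
    by (rule sum.cong) (auto simp: mI_def)
  then show "mm n (mI n) A i j = (if i < n \<and> j < n then A i j else 0)"
    by (simp add: mm_def)
qed

lemma mm_mI_right: "mm n A (mI n) = (\<lambda>i j. if i < n \<and> j < n then A i j else 0)"
proof (intro ext)
  fix i j
  have "j < n \<Longrightarrow> (\<Sum>k<n. A i k * mI n k j) = (\<Sum>k<n. if k = j then A i k else 0)"
    by (rule sum.cong) (auto simp: mI_def)
  then show "mm n A (mI n) i j = (if i < n \<and> j < n then A i j else 0)"
    by (simp add: mm_def)
qed

lemma bd_trunc: "bd n A \<Longrightarrow> (\<lambda>i j. if i < n \<and> j < n then A i j else 0) = A"
  by (auto simp: bd_def fun_eq_iff)

lemma bd_mm: "bd n (mm n A B)" by (simp add: bd_def mm_def)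
lemma bd_mI: "bd n (mI n)" by (simp add: bd_def mI_def)
lemma bd_mp: "bd n (mp n A k)" by (cases k) (simp_all add: bd_mI bd_mm)

lemma mm_mI_left_bd: "bd n A \<Longrightarrow> mm n (mI n) A = A" by (simp add: mm_mI_left bd_trunc)
lemma mm_mI_right_bd: "bd n A \<Longrightarrow> mm n A (mI n) = A" by (simp add: mm_mI_right bd_trunc)

lemma mp_Suc': "mp n A (Suc k) = mm n A (mp n A k)"
proof (induction k)
  case 0 show ?case by (simp add: mm_mI_left mm_mI_right)
next
  case (Suc k)
  have "mp n A (Suc (Suc k)) = mm n (mm n A (mp n A k)) A" using Suc by simp
  also have "\<dots> = mm n A (mp n A (Suc k))" by (simp add: mm_assoc)
  finally show ?case .
qed

lemma mp_add: "mp n A (k + l) = mm n (mp n A k) (mp n A l)"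
proof (induction l)
  case 0 show ?case by (simp add: mm_mI_right_bd bd_mp)
next
  case (Suc l) thus ?case by (simp add: mm_assoc)
qed

lemma mp_mult: "mp n (mp n A k) l = mp n A (k * l)"
proof (induction l)
  case 0 show ?case by simp
next
  case (Suc l)
  have "mp n (mp n A k) (Suc l) = mm n (mp n A (k * l)) (mp n A k)" using Suc by simp
  also have "\<dots> = mp n A (k * l + k)" by (simp add: mp_add)
  finally show ?case by (simp add: add.commute)
qed

lemma tr_mI_left: "tr n (mm n (mI n) A) = tr n A"
  by (simp add: tr_def mm_mI_left)

lemma mm_comm_mp:
  assumes "mm n A B = mm n B A"
  shows "mm n (mp n A k) B = mm n B (mp n A k)"
proof (induction k)
  case 0 show ?case by (simp add: mm_mI_left mm_mI_right)
next
  case (Suc k)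
  have "mm n (mp n A (Suc k)) B = mm n (mp n A k) (mm n A B)" by (simp add: mm_assoc)
  also have "\<dots> = mm n (mm n (mp n A k) B) A" by (simp add: assms mm_assoc)
  also have "\<dots> = mm n B (mp n A (Suc k))" by (simp add: Suc mm_assoc)
  finally show ?case .
qed


lemma D_single: "D n [M] = tr n M"
  using D_snoc[of n "[]" M] by (simp add: D_Nil)

lemma D_swap:
  fixes As :: "'a::comm_ring_1 mt list"
  assumes a: "a < length As" and b: "b < length As"
  shows "D n (As[a := As ! b, b := As ! a]) = D n As"
proof -
  have p: "Transposition.transpose a b permutes {..<length As}"
    using a b by (simp add: permutes_swap_id)
  have "map (\<lambda>k. As ! Transposition.transpose a b k) [0..<length As] = As[a := As ! b, b := As ! a]"
    by (rule nth_equalityI) (auto simp: nth_list_update transpose_def)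
  with D_perm[OF p, of n] show ?thesis by simp
qed

lemma D_rep_move:
  fixes Y :: "'a::comm_ring_1 mt"
  assumes a: "a < Suc r"
  shows "D n ((replicate (Suc r) Y)[a := W] @ T) = D n (replicate r Y @ W # T)"
proof -
  let ?L = "(replicate (Suc r) Y)[a := W] @ T"
  have len: "length ?L = Suc r + length T" by (simp only: length_append length_list_update length_replicate)
  have l: "a < length ?L" "r < length ?L" using a unfolding len by auto
  have "?L[a := ?L ! r, r := ?L ! a] = replicate r Y @ W # T"
    using a by (intro nth_equalityI) (auto simp: nth_list_update nth_append simp del: replicate.simps)
  then show ?thesis using D_swap[OF l, of n] by simp
qed

lemma D_last_swap:
  fixes As :: "'a::comm_ring_1 mt list"
  shows "D n (As @ [M, N]) = D n (As @ [N, M])"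
proof -
  let ?L = "As @ [M, N]"
  have l: "length As < length ?L" "Suc (length As) < length ?L" by auto
  have "?L[length As := ?L ! Suc (length As), Suc (length As) := ?L ! length As] = As @ [N, M]"
    by (intro nth_equalityI) (auto simp: nth_list_update nth_append)
  then show ?thesis using D_swap[OF l, of n] by simp
qed

context
  fixes n :: nat and Y :: "'a::comm_ring_1 mt"
  assumes bdY: "bd n Y" and trY: "\<And>k. k \<ge> 1 \<Longrightarrow> tr n (mp n Y k) = 0"
begin

definition "ff r M = D n (replicate r Y @ [M])"
definition "gg r M N = D n (replicate r Y @ [M, N])"

lemma ff_rec: "ff (Suc r) M = tr n M * ff r Y - of_nat (Suc r) * ff r (mm n Y M)"
proof -
  have "ff (Suc r) M = tr n M * D n (replicate (Suc r) Y)
      - (\<Sum>a<Suc r. D n ((replicate (Suc r) Y)[a := mm n ((replicate (Suc r) Y) ! a) M]))"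
    unfolding ff_def using D_snoc[of n "replicate (Suc r) Y" M] by (simp only: length_replicate)
  also have "(\<Sum>a<Suc r. D n ((replicate (Suc r) Y)[a := mm n ((replicate (Suc r) Y) ! a) M])) = (\<Sum>a<Suc r. ff r (mm n Y M))"
  proof (rule sum.cong[OF refl])
    fix a assume a: "a \<in> {..<Suc r}"
    then have "(replicate (Suc r) Y) ! a = Y" by (simp only: nth_replicate lessThan_iff)
    then show "D n ((replicate (Suc r) Y)[a := mm n ((replicate (Suc r) Y) ! a) M]) = ff r (mm n Y M)"
      using D_rep_move[of a r n Y "mm n Y M" "[]"] a by (simp add: ff_def del: replicate.simps)
  qed
  also have "D n (replicate (Suc r) Y) = ff r Y"
    by (simp add: ff_def replicate_append_same[symmetric])
  finally show ?thesis by simp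
qed

lemma mp1: "mp n Y 1 = Y" by (simp add: mm_mI_left_bd bdY)

lemma ff_pow_zero: "j \<ge> 1 \<Longrightarrow> ff r (mp n Y j) = 0"
proof (induction r arbitrary: j)
  case 0 thus ?case by (simp add: ff_def D_single trY)
next
  case (Suc r)
  have "ff (Suc r) (mp n Y j) = tr n (mp n Y j) * ff r Y - of_nat (Suc r) * ff r (mp n Y (Suc j))"
    by (simp add: ff_rec mp_Suc'[symmetric] del: mp.simps)
  also have "ff r Y = 0" using Suc.IH[of 1] by (simp add: mm_mI_left_bd bdY)
  also have "ff r (mp n Y (Suc j)) = 0" using Suc.IH[of "Suc j"] by simp
  finally show ?case by simp
qed

lemma ffY: "ff r Y = 0" using ff_pow_zero[of 1 r] by (simp add: mm_mI_left_bd bdY)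

lemma ff_closed: "ff r M = (-1) ^ r * of_nat (fact r) * tr n (mm n (mp n Y r) M)"
proof (induction r arbitrary: M)
  case 0 thus ?case by (simp add: ff_def D_single tr_mI_left)
next
  case (Suc r)
  have "ff (Suc r) M = - (of_nat (Suc r) * ff r (mm n Y M))" by (simp add: ff_rec ffY)
  also have "\<dots> = - (of_nat (Suc r) * ((-1) ^ r * of_nat (fact r) * tr n (mm n (mp n Y (Suc r)) M)))"
    by (simp add: Suc.IH mm_assoc)
  finally show ?case by (simp add: algebra_simps)
qed

lemma gg_rec: "gg (Suc r) M N = tr n N * ff (Suc r) M - of_nat (Suc r) * gg r M (mm n Y N) - ff (Suc r) (mm n M N)"
proof -
  let ?As = "replicate (Suc r) Y @ [M]"
  have len: "length ?As = Suc (Suc r)" by simp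
  have "gg (Suc r) M N = D n (?As @ [N])" by (simp add: gg_def del: replicate.simps)
  also have "\<dots> = tr n N * ff (Suc r) M - (\<Sum>a<Suc (Suc r). D n (?As[a := mm n (?As ! a) N]))"
    using D_snoc[of n ?As N] by (simp only: len ff_def)
  also have "(\<Sum>a<Suc (Suc r). D n (?As[a := mm n (?As ! a) N])) =
      (\<Sum>a<Suc r. D n (?As[a := mm n (?As ! a) N])) + D n (?As[Suc r := mm n (?As ! Suc r) N])"
    by (rule sum.lessThan_Suc)
  also have "D n (?As[Suc r := mm n (?As ! Suc r) N]) = ff (Suc r) (mm n M N)"
    by (simp add: ff_def nth_append list_update_append del: replicate.simps)
  also have "(\<Sum>a<Suc r. D n (?As[a := mm n (?As ! a) N])) = (\<Sum>a<Suc r. gg r M (mm n Y N))"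
  proof (rule sum.cong[OF refl])
    fix a assume a: "a \<in> {..<Suc r}"
    then have e1: "?As ! a = Y" by (simp add: nth_append del: replicate.simps)
    have e2: "?As[a := mm n Y N] = (replicate (Suc r) Y)[a := mm n Y N] @ [M]"
      using a by (simp add: list_update_append del: replicate.simps)
    show "D n (?As[a := mm n (?As ! a) N]) = gg r M (mm n Y N)"
      unfolding e1 e2 gg_def using a D_rep_move[of a r n Y "mm n Y N" "[M]"] D_last_swap[of n "replicate r Y" "mm n Y N" M]
      by simp
  qed
  finally show ?thesis by (simp add: algebra_simps)
qed

lemma gg0: "gg 0 M N = tr n N * tr n M - tr n (mm n M N)"
  using D_snoc[of n "[M]" N] by (simp add: gg_def D_single)

lemma alg_aux:
  fixes e F0 t b S c :: "'b::comm_ring_1"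
  shows "t * (- e * ((1 + of_nat r) * F0) * b) - (1 + of_nat r) * (e * F0 * (S - (1 + of_nat r) * c)) - (- e * ((1 + of_nat r) * F0) * c)
       = (- e * ((1 + of_nat r) * F0)) * (t * b + S - (2 + of_nat r) * c)"
  by (simp add: algebra_simps)

lemma gg_closed:
  assumes ZY: "mm n Y Z = mm n Z Y" and bdZ: "bd n Z"
  shows "gg r Z N = (-1) ^ r * of_nat (fact r) *
    ((\<Sum>s\<le>r. tr n (mm n (mp n Y s) N) * tr n (mm n (mp n Y (r - s)) Z)) - of_nat (Suc r) * tr n (mm n (mm n Z (mp n Y r)) N))"
proof (induction r arbitrary: N)
  case 0 thus ?case by (simp add: gg0 tr_mI_left mm_mI_right_bd bdZ algebra_simps)
next
  case (Suc r)
  define a where "a s = tr n (mm n (mp n Y s) N)" for s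
  define b where "b s = tr n (mm n (mp n Y s) Z)" for s
  define c where "c s = tr n (mm n (mm n Z (mp n Y s)) N)" for s
  have IH: "gg r Z (mm n Y N) = (-1) ^ r * of_nat (fact r) *
      ((\<Sum>s\<le>r. a (Suc s) * b (r - s)) - of_nat (Suc r) * c (Suc r))"
    unfolding Suc.IH a_def b_def c_def by (simp add: mm_assoc)
  have f1: "ff (Suc r) Z = (-1) ^ Suc r * of_nat (fact (Suc r)) * b (Suc r)"
    by (simp add: ff_closed b_def del: mp.simps)
  have f2: "ff (Suc r) (mm n Z N) = (-1) ^ Suc r * of_nat (fact (Suc r)) * c (Suc r)"
  proof -
    have "mm n (mp n Y (Suc r)) (mm n Z N) = mm n (mm n Z (mp n Y (Suc r))) N"
      by (simp only: mm_assoc[symmetric] mm_comm_mp[OF ZY])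
    then show ?thesis by (simp only: ff_closed c_def)
  qed
  have sh: "(\<Sum>s\<le>Suc r. a s * b (Suc r - s)) = tr n N * b (Suc r) + (\<Sum>s\<le>r. a (Suc s) * b (r - s))"
    by (subst sum.atMost_Suc_shift) (simp add: a_def tr_mI_left del: sum.atMost_Suc)
  have "gg (Suc r) Z N = tr n N * ff (Suc r) Z - of_nat (Suc r) * gg r Z (mm n Y N) - ff (Suc r) (mm n Z N)"
    by (rule gg_rec)
  also have "\<dots> = (-1) ^ Suc r * of_nat (fact (Suc r)) * ((\<Sum>s\<le>Suc r. a s * b (Suc r - s)) - of_nat (Suc (Suc r)) * c (Suc r))"
    unfolding f1 f2 IH sh using alg_aux[of "tr n N" "(-1) ^ r" r "of_nat (fact r)" "b (Suc r)" "\<Sum>s\<le>r. a (Suc s) * b (r - s)" "c (Suc r)"]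
    by (simp add: algebra_simps)
  finally show ?case by (simp add: a_def b_def c_def)
qed

end


lemma par_one: "par 0 (1::ea)" using par_sc[of 1] by simp
lemma par_minus: "par p a \<Longrightarrow> par p b \<Longrightarrow> par p (a - b)"
  using par_add[of p a "- b"] par_uminus[of p b] by simp

typedef ev = "{a::ea. par 0 a}" morphisms Rep_ev Abs_ev
  by (rule exI[of _ 0]) simp

lemma Rep_ev_par: "par 0 (Rep_ev x)" using Rep_ev[of x] by simp
lemma Abs_ev_inv: "par 0 a \<Longrightarrow> Rep_ev (Abs_ev a) = a" by (simp add: Abs_ev_inverse)
lemma Rep_ev_eqI: "Rep_ev x = Rep_ev y \<Longrightarrow> x = y" by (simp add: Rep_ev_inject)

instantiation ev :: comm_ring_1
begin
definition "zero_ev = Abs_ev 0"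
definition "one_ev = Abs_ev 1"
definition "plus_ev x y = Abs_ev (Rep_ev x + Rep_ev y)"
definition "uminus_ev x = Abs_ev (- Rep_ev x)"
definition "minus_ev x y = Abs_ev (Rep_ev x - Rep_ev y)"
definition "times_ev x y = Abs_ev (Rep_ev x * Rep_ev y)"

lemma Rep_ev_zero[simp]: "Rep_ev 0 = 0" by (simp add: zero_ev_def Abs_ev_inv)
lemma Rep_ev_one[simp]: "Rep_ev 1 = 1" by (simp add: one_ev_def Abs_ev_inv par_one)
lemma Rep_ev_plus[simp]: "Rep_ev (x + y) = Rep_ev x + Rep_ev y"
  by (simp add: plus_ev_def Abs_ev_inv par_add Rep_ev_par)
lemma Rep_ev_uminus[simp]: "Rep_ev (- x) = - Rep_ev x"
  by (simp add: uminus_ev_def Abs_ev_inv par_uminus Rep_ev_par)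
lemma Rep_ev_minus[simp]: "Rep_ev (x - y) = Rep_ev x - Rep_ev y"
  by (simp add: minus_ev_def Abs_ev_inv par_minus Rep_ev_par)
lemma Rep_ev_times[simp]: "Rep_ev (x * y) = Rep_ev x * Rep_ev y"
proof -
  have "par ((0 + 0) mod 2) (Rep_ev x * Rep_ev y)" by (rule par_mult) (simp_all add: Rep_ev_par)
  then show ?thesis by (simp add: times_ev_def Abs_ev_inv)
qed

instance
proof
  fix a b c :: ev
  show "a * b * c = a * (b * c)" by (rule Rep_ev_eqI) (simp add: mult.assoc)
  show "a * b = b * a" by (rule Rep_ev_eqI) (simp add: par_comm Rep_ev_par)
  show "1 * a = a" by (rule Rep_ev_eqI) simp
  show "(a + b) * c = a * c + b * c" by (rule Rep_ev_eqI) (simp add: distrib_right)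
  show "a + b + c = a + (b + c)" by (rule Rep_ev_eqI) (simp add: add.assoc)
  show "a + b = b + a" by (rule Rep_ev_eqI) (simp add: add.commute)
  show "0 + a = a" by (rule Rep_ev_eqI) simp
  show "- a + a = 0" by (rule Rep_ev_eqI) simp
  show "a - b = a + - b" by (rule Rep_ev_eqI) simp
  show "(0::ev) \<noteq> 1" using Rep_ev_one Rep_ev_zero zero_neq_one by metis
qed
end

lemma Rep_ev_sum: "Rep_ev (sum f I) = (\<Sum>i\<in>I. Rep_ev (f i))"
  by (induction I rule: infinite_finite_induct) simp_all
lemma Rep_ev_of_nat: "Rep_ev (of_nat k) = of_nat k"
  by (induction k) simp_all
lemma Rep_ev_of_int: "Rep_ev (of_int k) = of_int k"
  by (cases k rule: int_cases) (simp_all add: Rep_ev_of_nat del: of_nat_Suc)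
lemma Rep_ev_power: "Rep_ev (x ^ k) = Rep_ev x ^ k"
  by (induction k) simp_all

definition mapm :: "ev mt \<Rightarrow> ea mt" where "mapm A = (\<lambda>i j. Rep_ev (A i j))"

lemma mapm_mm: "mapm (mm n A B) = mm n (mapm A) (mapm B)"
  by (simp add: mapm_def mm_def fun_eq_iff Rep_ev_sum)
lemma mapm_mI: "mapm (mI n) = mI n"
  by (simp add: mapm_def mI_def fun_eq_iff)
lemma mapm_mp: "mapm (mp n A k) = mp n (mapm A) k"
  by (induction k) (simp_all add: mapm_mI mapm_mm)
lemma Rep_ev_tr: "Rep_ev (tr n A) = tr n (mapm A)"
  by (simp add: tr_def mapm_def Rep_ev_sum)
lemma mapm_inj: "mapm A = mapm B \<Longrightarrow> A = B"
  by (simp add: mapm_def fun_eq_iff Rep_ev_inject)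


definition Xe :: "nat \<Rightarrow> ea mt" where "Xe n = (\<lambda>i j. if i < n \<and> j < n then gen i j else 0)"

lemma par_Xe: "par 1 (Xe n i j)"
  unfolding Xe_def using par_gen[of i j] par_zero[of 1] by (cases "i < n \<and> j < n") auto

lemma par_mI: "par 0 (mI n i j)" by (simp add: mI_def par_one)

lemma par_mm:
  assumes "\<And>i j. par p (A i j)" "\<And>i j. par q (B i j)"
  shows "par ((p + q) mod 2) (mm n A B i j)"
  by (simp add: mm_def assms par_mult par_sum)

lemma par_mpX: "par (k mod 2) (mp n (Xe n) k i j)"
proof (induction k arbitrary: i j)
  case 0 thus ?case by (simp add: par_mI)
next
  case (Suc k)
  have "par ((k mod 2 + 1) mod 2) (mm n (mp n (Xe n) k) (Xe n) i j)"
    by (rule par_mm) (rule Suc, rule par_Xe)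
  moreover have "(k mod 2 + 1) mod 2 = Suc k mod 2" by presburger
  ultimately show ?case by simp
qed

lemma tr_mm: "tr n (mm n A B) = (\<Sum>i<n. \<Sum>k<n. A i k * B k i)"
  by (simp add: tr_def mm_def)

lemma half_zero: "(t::ea) + t = 0 \<Longrightarrow> t = 0"
proof -
  assume h: "t + t = 0"
  have "sc (1/2) * (t + t) = (sc (1/2) + sc (1/2)) * t" by (simp add: algebra_simps)
  also have "sc (1/2) + sc (1/2) = 1" by (simp add: sc_add[symmetric])
  finally show ?thesis using h by simp
qed

lemma tr_even_zero: "k \<ge> 1 \<Longrightarrow> tr n (mp n (Xe n) (2 * k)) = 0"
proof -
  assume k: "k \<ge> 1"
  define m where "m = 2 * k - 1"
  have km: "2 * k = Suc m" and odd: "m mod 2 = 1" using k unfolding m_def by presburger+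
  let ?A = "mp n (Xe n) m"
  have "tr n (mp n (Xe n) (2 * k)) = tr n (mm n ?A (Xe n))" by (simp add: km)
  also have "\<dots> = (\<Sum>i<n. \<Sum>l<n. ?A i l * Xe n l i)" by (rule tr_mm)
  also have "\<dots> = (\<Sum>i<n. \<Sum>l<n. - (Xe n l i * ?A i l))"
  proof (intro sum.cong refl)
    fix i l
    have "par 1 (?A i l)" using par_mpX[of m n i l] odd by simp
    then show "?A i l * Xe n l i = - (Xe n l i * ?A i l)" by (rule par_anticomm) (rule par_Xe)
  qed
  also have "\<dots> = - (\<Sum>l<n. \<Sum>i<n. Xe n l i * ?A i l)"
    by (subst sum.swap) (simp add: sum_negf)
  also have "(\<Sum>l<n. \<Sum>i<n. Xe n l i * ?A i l) = tr n (mm n (Xe n) ?A)" by (rule tr_mm[symmetric])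
  also have "\<dots> = tr n (mp n (Xe n) (2 * k))" by (simp only: km mp_Suc')
  finally have e: "tr n (mp n (Xe n) (2 * k)) = - tr n (mp n (Xe n) (2 * k))" .
  have "tr n (mp n (Xe n) (2 * k)) + tr n (mp n (Xe n) (2 * k)) = 0"
    using e[symmetric] by (simp only: neg_eq_iff_add_eq_0)
  then show ?thesis by (rule half_zero)
qed


definition boxed :: "nat \<Rightarrow> ea \<Rightarrow> bool" where
  "boxed n a \<longleftrightarrow> (\<forall>S. Rep_ea a S \<noteq> 0 \<longrightarrow> S \<subseteq> {..<n} \<times> {..<n})"

lemma boxed_add: "boxed n a \<Longrightarrow> boxed n b \<Longrightarrow> boxed n (a + b)"
  unfolding boxed_def
proof (intro allI impI)
  fix S assume a: "\<forall>S. Rep_ea a S \<noteq> 0 \<longrightarrow> S \<subseteq> {..<n} \<times> {..<n}"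
    and b: "\<forall>S. Rep_ea b S \<noteq> 0 \<longrightarrow> S \<subseteq> {..<n} \<times> {..<n}" and ne: "Rep_ea (a + b) S \<noteq> 0"
  from ne have "Rep_ea a S \<noteq> 0 \<or> Rep_ea b S \<noteq> 0" by (auto simp: ext_add_def)
  then show "S \<subseteq> {..<n} \<times> {..<n}" using a b by blast
qed
lemma boxed_uminus: "boxed n a \<Longrightarrow> boxed n (- a)"
  unfolding boxed_def by auto
lemma boxed_minus: "boxed n a \<Longrightarrow> boxed n b \<Longrightarrow> boxed n (a - b)"
  using boxed_add[of n a "- b"] boxed_uminus[of n b] by simp
lemma boxed_zero[simp]: "boxed n 0" by (simp add: boxed_def ext_zero_def)
lemma boxed_sc: "boxed n (sc c)" by (simp add: boxed_def ext_scalar_def)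
lemma boxed_one: "boxed n 1" using boxed_sc[of n 1] by simp
lemma boxed_sum: "(\<And>k. k \<in> I \<Longrightarrow> boxed n (f k)) \<Longrightarrow> boxed n (sum f I)"
  by (induction I rule: infinite_finite_induct) (auto intro: boxed_add)
lemma boxed_gen: "i < n \<Longrightarrow> j < n \<Longrightarrow> boxed n (gen i j)"
  by (simp add: boxed_def ext_gen_def)
lemma boxed_of_nat: "boxed n (of_nat k)" using boxed_sc[of n "of_nat k"] by (simp add: sc_of_nat)
lemma boxed_of_int: "boxed n (of_int k)" using boxed_sc[of n "of_int k"] by (simp add: sc_of_int)

lemma boxed_mult: "boxed n a \<Longrightarrow> boxed n b \<Longrightarrow> boxed n (a * b)"
  unfolding boxed_def
proof (intro allI impI)
  fix U assume a: "\<forall>S. Rep_ea a S \<noteq> 0 \<longrightarrow> S \<subseteq> {..<n} \<times> {..<n}"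
    and b: "\<forall>S. Rep_ea b S \<noteq> 0 \<longrightarrow> S \<subseteq> {..<n} \<times> {..<n}" and ne: "Rep_ea (a * b) U \<noteq> 0"
  from ne have "(\<Sum>S\<in>Pow U. Rep_ea a S * Rep_ea b (U - S) * shuffle_sign S (U - S)) \<noteq> 0"
    by (simp add: ext_mult_def)
  then obtain S where S: "S \<in> Pow U" "Rep_ea a S * Rep_ea b (U - S) * shuffle_sign S (U - S) \<noteq> 0"
    using sum.not_neutral_contains_not_neutral by blast
  then have "S \<subseteq> {..<n} \<times> {..<n}" "U - S \<subseteq> {..<n} \<times> {..<n}" using a b by auto
  then show "U \<subseteq> {..<n} \<times> {..<n}" by blast
qed

lemma boxed_power: "boxed n a \<Longrightarrow> boxed n (a ^ k)"
  by (induction k) (simp_all add: boxed_one boxed_mult)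

definition mboxed :: "nat \<Rightarrow> ea mt \<Rightarrow> bool" where "mboxed n A \<longleftrightarrow> (\<forall>i j. boxed n (A i j))"

lemma mboxed_mm: "mboxed n A \<Longrightarrow> mboxed n B \<Longrightarrow> mboxed n (mm n A B)"
  by (simp add: mboxed_def mm_def boxed_sum boxed_mult)
lemma mboxed_mI: "mboxed n (mI n)" by (simp add: mboxed_def mI_def boxed_one)
lemma mboxed_mp: "mboxed n A \<Longrightarrow> mboxed n (mp n A k)"
  by (induction k) (simp_all add: mboxed_mI mboxed_mm)
lemma mboxed_Xe: "mboxed n (Xe n)" by (simp add: mboxed_def Xe_def boxed_gen)
lemma boxed_tr: "mboxed n A \<Longrightarrow> boxed n (tr n A)" by (simp add: tr_def mboxed_def boxed_sum)

lemma theta_cancel: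
  assumes bx: "boxed n a" and z: "gen n n * a = 0"
  shows "a = 0"
proof (rule Rep_ea_eqI)
  fix S
  show "Rep_ea a S = Rep_ea 0 S"
  proof (cases "S \<subseteq> {..<n} \<times> {..<n}")
    case False thus ?thesis using bx by (auto simp: boxed_def ext_zero_def)
  next
    case True
    have fS: "finite S" using True finite_subset by blast
    have nS: "(n, n) \<notin> S" using True by auto
    let ?U = "insert (n, n) S"
    have "Rep_ea (gen n n * a) ?U = (\<Sum>T\<in>Pow ?U. if T = {(n, n)} then Rep_ea a (?U - T) * shuffle_sign T (?U - T) else 0)"
      by (simp add: ext_mult_def) (intro sum.cong refl, auto simp: ext_gen_def)
    also have "\<dots> = Rep_ea a S * shuffle_sign {(n, n)} S"
      using fS nS by (simp add: sum.delta)
    finally have "Rep_ea a S * shuffle_sign {(n, n)} S = 0" using z by (simp add: ext_zero_def)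
    moreover have "shuffle_sign {(n, n)} S \<noteq> 0" by (simp add: shuffle_sign_def)
    ultimately show ?thesis by (simp add: ext_zero_def)
  qed
qed


definition smat :: "ea \<Rightarrow> ea mt \<Rightarrow> ea mt" where "smat t A = (\<lambda>i j. t * A i j)"

lemma mm_smat_left: "mm n (smat t A) B = smat t (mm n A B)"
  by (simp add: mm_def smat_def fun_eq_iff sum_distrib_left mult.assoc)

lemma mm_smat_right:
  assumes "\<And>i j. par 0 (A i j)"
  shows "mm n A (smat t B) = smat t (mm n A B)"
proof -
  have "A i k * (t * B k j) = t * (A i k * B k j)" for i k j
    using par_comm[OF assms[of i k], of t] by (simp add: mult.assoc[symmetric])
  then show ?thesis by (simp add: mm_def smat_def fun_eq_iff sum_distrib_left)
qed

lemma tr_smat: "tr n (smat t A) = t * tr n A"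
  by (simp add: tr_def smat_def sum_distrib_left)

lemma bd_Xe: "bd n (Xe n)" by (simp add: bd_def Xe_def)

lemma mp2: "mp n (Xe n) 2 = mm n (Xe n) (Xe n)"
  by (simp add: numeral_2_eq_2 mm_mI_left_bd bd_Xe)

lemma par_even_mp: "par 0 (mp n (Xe n) (2 * k) i j)"
  using par_mpX[of "2 * k" n i j] by simp

context
  fixes n :: nat and v w :: "nat \<Rightarrow> complex"
  assumes n1: "n \<ge> 1"
begin

definition "Be = (\<lambda>i j. if i < n \<and> j < n then sc (v i * w j) else 0)"
definition "th = gen n n"
definition "Ye = mm n (Xe n) (Xe n)"

definition "Yv = (\<lambda>i j. Abs_ev (Ye i j))"
definition "Zv = (\<lambda>i j. Abs_ev (th * Xe n i j))"
definition "Bv = (\<lambda>i j. Abs_ev (Be i j))"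

lemma par_Ye: "par 0 (Ye i j)"
  using par_mm[of 1 "Xe n" 1 "Xe n" n i j, OF par_Xe par_Xe] by (simp add: Ye_def)
lemma par_Z: "par 0 (th * Xe n i j)"
  using par_mult[OF par_gen par_Xe, of n n n i j] by (simp add: th_def)
lemma par_Be: "par 0 (Be i j)" by (simp add: Be_def par_sc)

lemma mapm_Yv: "mapm Yv = Ye" by (simp add: mapm_def Yv_def Abs_ev_inv par_Ye)
lemma mapm_Zv: "mapm Zv = smat th (Xe n)" by (simp add: mapm_def Zv_def smat_def Abs_ev_inv par_Z)
lemma mapm_Bv: "mapm Bv = Be" by (simp add: mapm_def Bv_def Abs_ev_inv par_Be)

lemma Ye_mp: "Ye = mp n (Xe n) 2" by (simp add: Ye_def mp2)

lemma mp_Ye: "mp n Ye k = mp n (Xe n) (2 * k)"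
  by (simp add: Ye_mp mp_mult)

lemma bd_Yv: "bd n Yv"
  unfolding bd_def
proof (intro allI impI)
  fix i j assume "\<not> (i < n \<and> j < n)"
  then have "Ye i j = 0" by (auto simp: Ye_def mm_def)
  then show "Yv i j = 0" by (simp add: Yv_def zero_ev_def)
qed

lemma bd_Zv: "bd n Zv"
  unfolding bd_def
proof (intro allI impI)
  fix i j assume "\<not> (i < n \<and> j < n)"
  then have "Xe n i j = 0" by (auto simp: Xe_def)
  then show "Zv i j = 0" by (simp add: Zv_def zero_ev_def)
qed

lemma trYv: "k \<ge> 1 \<Longrightarrow> tr n (mp n Yv k) = 0"
proof -
  assume k: "k \<ge> 1"
  have "Rep_ev (tr n (mp n Yv k)) = tr n (mp n (Xe n) (2 * k))"
    by (simp add: Rep_ev_tr mapm_mp mapm_Yv mp_Ye)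
  also have "\<dots> = 0" using k by (rule tr_even_zero)
  finally show ?thesis by (metis Rep_ev_eqI Rep_ev_zero)
qed

lemma ZY: "mm n Yv Zv = mm n Zv Yv"
proof (rule mapm_inj)
  have "mapm (mm n Yv Zv) = smat th (mm n Ye (Xe n))"
    by (simp add: mapm_mm mapm_Yv mapm_Zv mm_smat_right par_Ye)
  also have "mm n Ye (Xe n) = mm n (Xe n) Ye" by (simp add: Ye_def mm_assoc)
  also have "smat th (mm n (Xe n) Ye) = mapm (mm n Zv Yv)"
    by (simp add: mapm_mm mapm_Yv mapm_Zv mm_smat_left)
  finally show "mapm (mm n Yv Zv) = mapm (mm n Zv Yv)" .
qed

lemma core_ev:
  "(-1) ^ (n - 1) * of_nat (fact (n - 1)) *
    ((\<Sum>s\<le>n - 1. tr n (mm n (mp n Yv s) Bv) * tr n (mm n (mp n Yv (n - 1 - s)) Zv))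
      - of_nat n * tr n (mm n (mm n Zv (mp n Yv (n - 1))) Bv)) = (0::ev)"
proof -
  have "gg n Yv (n - 1) Zv Bv = D n (replicate (n - 1) Yv @ [Zv, Bv])"
    by (simp add: gg_def[OF bd_Yv trYv])
  also have "\<dots> = 0" by (rule D_zero) (use n1 in simp)
  finally have "gg n Yv (n - 1) Zv Bv = 0" .
  moreover have "of_nat (Suc (n - 1)) = (of_nat n :: ev)" using n1 by simp
  ultimately show ?thesis
    using gg_closed[OF bd_Yv trYv ZY bd_Zv, of "n - 1" Bv] by simp
qed

definition "bil m = tr n (mm n (mp n (Xe n) m) Be)"
definition "tro m = tr n (mp n (Xe n) m)"

lemma par_bil_even: "par 0 (bil (2 * s))"
proof -
  have "par ((0 + 0) mod 2) (mm n (mp n (Xe n) (2 * s)) Be i j)" for i j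
    by (rule par_mm) (simp_all add: par_even_mp par_Be)
  then show ?thesis by (simp add: bil_def tr_def par_sum)
qed

lemma Rep_ev_neg1_pow: "Rep_ev ((-1) ^ k) = (-1) ^ k"
  by (simp add: Rep_ev_power)

lemma core_ea:
  "(-1) ^ (n - 1) * of_nat (fact (n - 1)) *
    ((\<Sum>s\<le>n - 1. bil (2 * s) * (th * tro (Suc (2 * (n - 1 - s))))) - of_nat n * (th * bil (Suc (2 * (n - 1))))) = (0::ea)"
proof -
  have t1: "Rep_ev (tr n (mm n (mp n Yv s) Bv)) = bil (2 * s)" for s
    by (simp add: Rep_ev_tr mapm_mm mapm_mp mapm_Yv mapm_Bv mp_Ye bil_def)
  have t2: "Rep_ev (tr n (mm n (mp n Yv k) Zv)) = th * tro (Suc (2 * k))" for k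
  proof -
    have "Rep_ev (tr n (mm n (mp n Yv k) Zv)) = tr n (mm n (mp n (Xe n) (2 * k)) (smat th (Xe n)))"
      by (simp add: Rep_ev_tr mapm_mm mapm_mp mapm_Yv mapm_Zv mp_Ye)
    also have "\<dots> = th * tro (Suc (2 * k))"
      by (simp add: mm_smat_right par_even_mp tr_smat tro_def)
    finally show ?thesis .
  qed
  have t3: "Rep_ev (tr n (mm n (mm n Zv (mp n Yv r)) Bv)) = th * bil (Suc (2 * r))" for r
  proof -
    have "Rep_ev (tr n (mm n (mm n Zv (mp n Yv r)) Bv)) = tr n (mm n (mm n (smat th (Xe n)) (mp n (Xe n) (2 * r))) Be)"
      by (simp add: Rep_ev_tr mapm_mm mapm_mp mapm_Yv mapm_Zv mapm_Bv mp_Ye)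
    also have "\<dots> = th * bil (Suc (2 * r))"
      by (simp add: mm_smat_left tr_smat bil_def mp_Suc' del: mp.simps)
    finally show ?thesis .
  qed
  have "Rep_ev ((-1) ^ (n - 1) * of_nat (fact (n - 1)) *
    ((\<Sum>s\<le>n - 1. tr n (mm n (mp n Yv s) Bv) * tr n (mm n (mp n Yv (n - 1 - s)) Zv))
      - of_nat n * tr n (mm n (mm n Zv (mp n Yv (n - 1))) Bv))) = Rep_ev (0::ev)"
    using core_ev n1 by simp
  then show ?thesis
    by (simp add: Rep_ev_sum Rep_ev_of_nat Rep_ev_neg1_pow t1 t2 t3 del: of_nat_fact)
qed

definition "Rea = sc ((-1) ^ n) * (sc (fact n) * bil (2 * n - 1) + sc (- fact (n - 1)) *
   (\<Sum>k\<in>{0..n - 1}. tro (2 * k + 1) * bil (2 * n - 2 - 2 * k)))"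

lemma sc_power: "sc (c ^ k) = sc c ^ k" by (induction k) (simp_all add: sc_mult)

lemma sum_reorder:
  "(\<Sum>s\<le>n - 1. bil (2 * s) * (th * tro (Suc (2 * (n - 1 - s)))))
    = th * (\<Sum>k\<in>{0..n - 1}. tro (2 * k + 1) * bil (2 * n - 2 - 2 * k))"
proof -
  have "(\<Sum>s\<le>n - 1. bil (2 * s) * (th * tro (Suc (2 * (n - 1 - s)))))
      = (\<Sum>s\<le>n - 1. th * (tro (Suc (2 * (n - 1 - s))) * bil (2 * s)))"
  proof (rule sum.cong[OF refl])
    fix s
    have c1: "bil (2 * s) * th = th * bil (2 * s)" by (rule par_comm[OF par_bil_even])
    have c2: "bil (2 * s) * tro (Suc (2 * (n - 1 - s))) = tro (Suc (2 * (n - 1 - s))) * bil (2 * s)"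
      by (rule par_comm[OF par_bil_even])
    show "bil (2 * s) * (th * tro (Suc (2 * (n - 1 - s)))) = th * (tro (Suc (2 * (n - 1 - s))) * bil (2 * s))"
      by (simp only: mult.assoc[symmetric] c1) (simp only: mult.assoc c2)
  qed
  also have "\<dots> = th * (\<Sum>s\<le>n - 1. tro (Suc (2 * (n - 1 - s))) * bil (2 * s))"
    by (simp add: sum_distrib_left)
  also have "(\<Sum>s\<le>n - 1. tro (Suc (2 * (n - 1 - s))) * bil (2 * s)) = (\<Sum>k\<in>{0..n - 1}. tro (2 * k + 1) * bil (2 * n - 2 - 2 * k))"
  proof -
    define G where "G k = tro (2 * k + 1) * bil (2 * n - 2 - 2 * k)" for k
    have "(\<Sum>k\<in>{0..n - 1}. G k) = (\<Sum>s\<in>{0..n - 1}. G (n - 1 + 0 - s))"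
      by (rule sum.atLeastAtMost_rev)
    also have "\<dots> = (\<Sum>s\<le>n - 1. tro (Suc (2 * (n - 1 - s))) * bil (2 * s))"
      unfolding atLeast0AtMost
    proof (rule sum.cong[OF refl])
      fix s assume "s \<in> {..n - 1}"
      then have s: "s \<le> n - 1" by simp
      have a1: "2 * (n - 1 - s) + 1 = Suc (2 * (n - 1 - s))" by simp
      have a2: "2 * n - 2 - 2 * (n - 1 - s) = 2 * s" using s n1 by simp
      show "G (n - 1 + 0 - s) = tro (Suc (2 * (n - 1 - s))) * bil (2 * s)"
        unfolding G_def by (simp only: add_0_right a1 a2)
    qed
    finally show ?thesis unfolding G_def by simp
  qed
  finally show ?thesis .
qed

lemma th_Rea: "th * Rea = 0"
proof -
  obtain m where m: "n = Suc m" using n1 by (cases n) auto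
  define S where "S = (\<Sum>k\<in>{0..n - 1}. tro (2 * k + 1) * bil (2 * n - 2 - 2 * k))"
  define b where "b = bil (2 * n - 1)"
  define c where "c = ((-1) ^ m * of_nat (fact m) :: complex)"
  define d where "d = (of_nat (Suc m) :: complex)"
  have bb: "bil (Suc (2 * (n - 1))) = b" by (simp add: b_def m)
  have core: "sc c * (th * S - sc d * (th * b)) = 0"
    using core_ea unfolding sum_reorder bb S_def[symmetric]
    by (simp add: c_def d_def m sc_mult sc_power sc_uminus sc_of_nat sc_add del: of_nat_fact)
  have e1: "sc c * (th * S) = th * (sc c * S)"
    by (simp only: mult.assoc[symmetric] sc_comm[of c th])
  have e2: "sc c * (sc d * (th * b)) = th * (sc (c * d) * b)"
    by (simp only: mult.assoc[symmetric] sc_mult[symmetric] sc_comm[of "c * d" th])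
  have "sc c * (th * S - sc d * (th * b)) = th * (sc c * S - sc (c * d) * b)"
    by (simp only: right_diff_distrib e1 e2)
  moreover have "Rea = sc c * S - sc (c * d) * b"
  proof -
    have "Rea = sc ((-1) ^ n * fact n) * b + sc ((-1) ^ n * - fact (n - 1)) * S"
      by (simp only: Rea_def S_def[symmetric] b_def[symmetric] distrib_left mult.assoc[symmetric] sc_mult[symmetric])
    moreover have "(-1) ^ n * fact n = - (c * d)" by (simp add: c_def d_def m)
    moreover have "(-1) ^ n * - fact (n - 1) = c" by (simp add: c_def m)
    ultimately have "Rea = sc (- (c * d)) * b + sc c * S" by (simp only:)
    then show ?thesis by (simp add: sc_uminus)
  qed
  ultimately show ?thesis using core by simp
qed

end


lemma Qsum_zero: "Qsum n v w = ext_zero"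
proof
  fix S
  define h where "h i j = v (i n) * w (j n) * ext_prod_list (map (\<lambda>k. mat_pow n Xmat 2 (i k) (j k)) [0..<n - 1]
       @ [Xmat (i (n - 1)) (j (n - 1))]) S" for i j :: "nat \<Rightarrow> nat"
  have dom: "{0..n} = {..<Suc n}" by auto
  have "Qsum n v w S = (\<Sum>\<sigma>\<in>{\<sigma>. \<sigma> permutes {..<Suc n}}. \<Sum>i\<in>{..<Suc n} \<rightarrow>\<^sub>E {..<n}. of_int (sign \<sigma>) * h i (i \<circ> \<sigma>))"
    unfolding Qsum_def ext_sum_def ext_smult_def h_def dom
    by (intro sum.cong refl) (simp add: o_def mult.assoc)
  also have "\<dots> = 0" by (rule pigeon) simp
  finally show "Qsum n v w S = ext_zero S" by (simp add: ext_zero_def)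
qed

lemma ext_sum_cong: "(\<And>k. k \<in> I \<Longrightarrow> f k = g k) \<Longrightarrow> ext_sum f I = ext_sum g I"
  by (simp add: ext_sum_def)

lemma mat_pow_Rep: "i < n \<Longrightarrow> j < n \<Longrightarrow> mat_pow n Xmat m i j = Rep_ea (mp n (Xe n) m i j)"
proof (induction m arbitrary: i j)
  case 0 thus ?case by (simp add: mat_id_def mI_def)
next
  case (Suc m)
  have "Rep_ea (mp n (Xe n) (Suc m) i j) = ext_sum (\<lambda>k. ext_mult (Rep_ea (mp n (Xe n) m i k)) (Rep_ea (Xe n k j))) {..<n}"
    using Suc.prems by (simp add: mm_def Rep_sum)
  also have "\<dots> = ext_sum (\<lambda>k. ext_mult (mat_pow n Xmat m i k) (Xmat k j)) {..<n}"
    using Suc by (intro ext_sum_cong) (simp add: Xe_def Xmat_def)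
  finally show ?case by (simp add: mat_mult_def)
qed

lemma ext_mult_scalar_ok: "ea_ok b \<Longrightarrow> ext_mult (ext_scalar c) b = ext_smult c b"
  by (rule ext, case_tac "finite x") (auto simp: ext_mult_scalar_left ext_mult_inf ext_smult_def ea_ok_def)

lemma rep_tro: "n \<ge> 1 \<Longrightarrow> mat_trace n (mat_pow n Xmat m) = Rep_ea (tro n m)"
  by (simp add: tro_def tr_def mat_trace_def Rep_sum del: mat_pow.simps)
     (intro ext_sum_cong, simp add: mat_pow_Rep del: mat_pow.simps)

lemma rep_bil: "n \<ge> 1 \<Longrightarrow> bilin n w (mat_pow n Xmat m) v = Rep_ea (bil n v w m)"
proof -
  assume n1: "n \<ge> 1"
  let ?P = "mp n (Xe n) m"
  have "bil n v w m = (\<Sum>i<n. \<Sum>k<n. ?P i k * Be n v w k i)"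
    by (simp add: bil_def[OF n1] tr_mm)
  also have "\<dots> = (\<Sum>i<n. \<Sum>k<n. sc (w i * v k) * ?P i k)"
    by (intro sum.cong refl) (simp add: Be_def[OF n1] sc_comm mult.commute)
  also have "\<dots> = (\<Sum>p\<in>{..<n} \<times> {..<n}. sc (w (fst p) * v (snd p)) * ?P (fst p) (snd p))"
    by (simp add: sum.cartesian_product split_def)
  finally have e: "bil n v w m = \<dots>" .
  show ?thesis unfolding e Rep_sum bilin_def
    by (intro ext_sum_cong) (auto simp: ext_mult_scalar_ok mat_pow_Rep split_def simp del: mat_pow.simps)
qed

lemma rep_Rea: "n \<ge> 1 \<Longrightarrow> ext_smult ((-1) ^ n)
      (ext_add
        (ext_smult (fact n) (bilin n w (mat_pow n Xmat (2 * n - 1)) v))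
        (ext_smult (- fact (n - 1))
          (ext_sum (\<lambda>k. ext_mult (mat_trace n (mat_pow n Xmat (2 * k + 1)))
                                  (bilin n w (mat_pow n Xmat (2 * n - 2 - 2 * k)) v))
             {0..n - 1}))) = Rep_ea (Rea n v w)"
  by (simp add: Rea_def ext_mult_scalar_ok Rep_sum rep_tro rep_bil del: mat_pow.simps)

lemma boxed_Rea: "n \<ge> 1 \<Longrightarrow> boxed n (Rea n v w)"
proof -
  assume n1: "n \<ge> 1"
  have mB: "mboxed n (Be n v w)" by (simp add: mboxed_def Be_def[OF n1] boxed_sc)
  have bb: "boxed n (bil n v w m)" for m
    by (simp add: bil_def[OF n1] boxed_tr mboxed_mm mboxed_mp mboxed_Xe mB)
  have bt: "boxed n (tro n m)" for m
    by (simp add: tro_def[OF n1] boxed_tr mboxed_mp mboxed_Xe)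
  show ?thesis
    by (simp add: Rea_def[OF n1] boxed_mult boxed_add boxed_sc boxed_sum bb bt)
qed

lemma Rea_zero: "n \<ge> 1 \<Longrightarrow> Rea n v w = 0"
  by (rule theta_cancel[OF boxed_Rea]) (use th_Rea[of n v w] in \<open>simp_all add: th_def\<close>)

theorem proposition2p2:
  fixes n :: nat and v w :: "nat \<Rightarrow> complex"
  assumes "n \<ge> 1"
  shows "Qsum n v w =
    ext_smult ((-1) ^ n)
      (ext_add
        (ext_smult (fact n) (bilin n w (mat_pow n Xmat (2 * n - 1)) v))
        (ext_smult (- fact (n - 1))
          (ext_sum (\<lambda>k. ext_mult (mat_trace n (mat_pow n Xmat (2 * k + 1)))
                                  (bilin n w (mat_pow n Xmat (2 * n - 2 - 2 * k)) v))
             {0..n - 1})))"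
  unfolding rep_Rea[OF assms] Rea_zero[OF assms] Qsum_zero by simp


end
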